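(* Let $n\ge 1$ and $\alpha\in[n-1,n]$. Let $\Omega\subset\mathbb{R}^n$ be a bounded measurable set with $|\Omega|>0$ whose topological boundary satisfies $$0<M_2\le \underline{\mathcal{M}}^{\alpha}(\partial\Omega)\le \overline{\mathcal{M}}^{\alpha}(\partial\Omega)\le M_1<\infty$$ for some constants $M_1,M_2>0$. Assume there is a constant $D_{\partial\Omega}>0$ such that for all $x\in\partial\Omega$ and all $t\in(0,1)$, $$\min\{|B(x,t)\cap\Omega|,\ |B(x,t)\cap\Omega^c|\}\ge D_{\partial\Omega}\, t^n .$$ Let $J\ge 0$ be a function in $L^1(\mathbb{R}^n)$ with $\int_{\mathbb{R}^n}J(z)|z|^n\,dz<\infty$, and let $C_J>0$ be a constant with $\int_{\mathbb{R}^n}J(z)|z|^{\gamma}\,dz\le C_J$ for all $\gamma\in[0,n]$. Assume further that there are constants $c_J,a_J>0$ with $J(z)\ge c_J$ whenever $|z|\le a_J$. Define, for $t>0$, $$\mathcal{J}_t(\Omega)=\int_{\Omega}\int_{\Omega^c}J\Big(\frac{x-y}{t}\Big)\,dx\,dy .$$ Then there is a constant $O_1$ depending only on $n$ and $C_J$, and a constant $O_2>0$ depending only on $n,a_J,c_J,D_{\partial\Omega}$, such that $$0<O_2 M_2\le \liminf_{t\to0^+}\frac{\mathcal{J}_t(\Omega)}{t^{2n-\alpha}}\le \limsup_{t\to0^+}\frac{\mathcal{J}_t(\Omega)}{t^{2n-\alpha}}\le O_1M_1<\infty .$$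
   Context: $|A|$ denotes Lebesgue measure, $\Omega^c=\mathbb{R}^n\setminus\Omega$, $B(x,t)$ is the open ball. For a bounded set $A\subset\mathbb{R}^n$, $B(A,t)=\{x:\mathrm{dist}(x,A)<t\}$, and the $\alpha$-dimensional upper and lower Minkowski contents are $\overline{\mathcal{M}}^{\alpha}(A)=\limsup_{t\to0^+}|B(A,t)|/t^{n-\alpha}$ and $\underline{\mathcal{M}}^{\alpha}(A)=\liminf_{t\to0^+}|B(A,t)|/t^{n-\alpha}$. *)

theory Defs
  imports "HOL-Analysis.Analysis"
begin

definition nbhd :: "'a::euclidean_space set \<Rightarrow> real \<Rightarrow> 'a set" where
  "nbhd A t = {x. \<exists>a\<in>A. dist x a < t}"

definition upper_minkowski :: "real \<Rightarrow> 'a::euclidean_space set \<Rightarrow> ereal" where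
  "upper_minkowski \<alpha> A =
     Limsup (at_right 0) (\<lambda>t. ereal (measure lebesgue (nbhd A t) / t powr (real DIM('a) - \<alpha>)))"

definition lower_minkowski :: "real \<Rightarrow> 'a::euclidean_space set \<Rightarrow> ereal" where
  "lower_minkowski \<alpha> A =
     Liminf (at_right 0) (\<lambda>t. ereal (measure lebesgue (nbhd A t) / t powr (real DIM('a) - \<alpha>)))"

definition nonlocal_J :: "('a::euclidean_space \<Rightarrow> real) \<Rightarrow> 'a set \<Rightarrow> real \<Rightarrow> real" where
  "nonlocal_J J \<Omega> t =
     (LINT y:\<Omega>|lebesgue. (LINT x:(- \<Omega>)|lebesgue. J ((1 / t) *\<^sub>R (x - y))))"

end

theory Submission
  imports Defs
begin

lemma sigma_finite_lebesgue: "sigma_finite_measure (lebesgue :: 'a::euclidean_space measure)"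
proof -
  obtain A :: "'a set set" where A: "countable A" "A \<subseteq> sets lborel" "\<Union>A = space lborel"
    "\<forall>a\<in>A. emeasure lborel a \<noteq> \<infinity>"
    using sigma_finite_lborel unfolding sigma_finite_measure_def by blast
  show ?thesis unfolding sigma_finite_measure_def
    using A by (intro exI[of _ A]) (auto simp: subset_eq)
qed

interpretation leb_pair: pair_sigma_finite "lebesgue :: 'a::euclidean_space measure" "lebesgue :: 'a measure"
  by (simp add: pair_sigma_finite_def sigma_finite_lebesgue)

lemma id_leb_borel: "(\<lambda>x. x) \<in> (lebesgue :: 'a::euclidean_space measure) \<rightarrow>\<^sub>M borel"
  by (rule measurable_completion) simp

lemma fst_leb_borel[measurable]: "fst \<in> borel_measurable ((lebesgue :: 'a::euclidean_space measure) \<Otimes>\<^sub>M (lebesgue :: 'b::euclidean_space measure))"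
  using measurable_compose[OF measurable_fst id_leb_borel] by metis

lemma snd_leb_borel[measurable]: "snd \<in> borel_measurable ((lebesgue :: 'a::euclidean_space measure) \<Otimes>\<^sub>M (lebesgue :: 'b::euclidean_space measure))"
  using measurable_compose[OF measurable_snd id_leb_borel] by (metis)

lemma J_snd_meas[measurable]: "J \<in> borel_measurable lebesgue \<Longrightarrow>
  (\<lambda>p. J (snd p)) \<in> borel_measurable ((lebesgue :: 'b::euclidean_space measure) \<Otimes>\<^sub>M (lebesgue :: 'a::euclidean_space measure))"
  using measurable_compose[OF measurable_snd] by blast

lemma affine_eq_sum: "(\<lambda>x. a + (\<Sum>j\<in>Basis. (c * (x \<bullet> j)) *\<^sub>R j)) = (\<lambda>x::'a::euclidean_space. a + c *\<^sub>R x)"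
  unfolding scaleR_scaleR[symmetric] scaleR_sum_right[symmetric] euclidean_representation by simp

lemma affine_leb_meas[measurable]: "(\<lambda>x::'a::euclidean_space. a + c *\<^sub>R x) \<in> lebesgue \<rightarrow>\<^sub>M lebesgue"
proof (cases "c = 0")
  case True then show ?thesis by simp
next
  case False then show ?thesis
    using lebesgue_affine_measurable[of "\<lambda>_. c" a] by (simp add: affine_eq_sum)
qed

lemma nn_integral_affine_leb:
  fixes f :: "'a::euclidean_space \<Rightarrow> ennreal" and c :: real and a :: 'a
  assumes f[measurable]: "f \<in> borel_measurable lebesgue" and c: "c \<noteq> 0"
  shows "(\<integral>\<^sup>+x. f x \<partial>lebesgue) = ennreal (\<bar>c\<bar>^DIM('a)) * (\<integral>\<^sup>+x. f (a + c *\<^sub>R x) \<partial>lebesgue)"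
proof -
  have "(\<integral>\<^sup>+x. f x \<partial>lebesgue) = (\<integral>\<^sup>+x. f x \<partial>density (distr lebesgue lebesgue (\<lambda>x. a + c *\<^sub>R x)) (\<lambda>_. ennreal (\<bar>c\<bar>^DIM('a))))"
    using lebesgue_affine_euclidean[of "\<lambda>_. c" a] c by (simp add: affine_eq_sum)
  also have "\<dots> = \<integral>\<^sup>+ x. ennreal (\<bar>c\<bar>^DIM('a)) * f x \<partial>distr lebesgue lebesgue (\<lambda>x. a + c *\<^sub>R x)"
    by (subst nn_integral_density) auto
  also have "\<dots> = ennreal (\<bar>c\<bar>^DIM('a)) * integral\<^sup>N (distr lebesgue lebesgue (\<lambda>x. a + c *\<^sub>R x)) f"
    using f measurable_distr_eq1 nn_integral_cmult by blast
  also have "\<dots> = ennreal (\<bar>c\<bar>^DIM('a)) * (\<integral>\<^sup>+x. f (a + c *\<^sub>R x) \<partial>lebesgue)"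
    by (subst nn_integral_distr) auto
  finally show ?thesis .
qed

lemma emeasure_affine_preimage:
  fixes S :: "'a::euclidean_space set" and c :: real
  assumes S: "S \<in> sets lebesgue" and c: "c \<noteq> 0"
  shows "emeasure lebesgue S = ennreal (\<bar>c\<bar>^DIM('a)) * emeasure lebesgue {x. a + c *\<^sub>R x \<in> S}"
    and "{x. a + c *\<^sub>R x \<in> S} \<in> sets lebesgue"
proof -
  have m: "(\<lambda>x. a + c *\<^sub>R x) -` S \<inter> space lebesgue \<in> sets lebesgue"
    by (rule measurable_sets[OF affine_leb_meas S])
  then show "{x. a + c *\<^sub>R x \<in> S} \<in> sets lebesgue" by (simp add: vimage_def)
  have "emeasure lebesgue S = (\<integral>\<^sup>+x. indicator S x \<partial>lebesgue)" using S by simp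
  also have "\<dots> = ennreal (\<bar>c\<bar>^DIM('a)) * (\<integral>\<^sup>+x. indicator S (a + c *\<^sub>R x) \<partial>lebesgue)"
    using S c by (intro nn_integral_affine_leb) auto
  also have "(\<lambda>x. indicator S (a + c *\<^sub>R x) :: ennreal) = indicator {x. a + c *\<^sub>R x \<in> S}"
    by (auto simp: indicator_def)
  also have "(\<integral>\<^sup>+x. indicator {x. a + c *\<^sub>R x \<in> S} x \<partial>lebesgue) = emeasure lebesgue {x. a + c *\<^sub>R x \<in> S}"
    using m by (simp add: vimage_def)
  finally show "emeasure lebesgue S = ennreal (\<bar>c\<bar>^DIM('a)) * emeasure lebesgue {x. a + c *\<^sub>R x \<in> S}" .
qed

lemma null_affine_preimage:
  fixes N :: "'a::euclidean_space set" and c :: real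
  assumes N: "N \<in> null_sets lebesgue" and c: "c \<noteq> 0"
  shows "{x. a + c *\<^sub>R x \<in> N} \<in> null_sets lebesgue"
proof -
  have S: "N \<in> sets lebesgue" using N by auto
  have "0 = ennreal (\<bar>c\<bar>^DIM('a)) * emeasure lebesgue {x. a + c *\<^sub>R x \<in> N}"
    using emeasure_affine_preimage(1)[OF S c, of a] N by auto
  then have "emeasure lebesgue {x. a + c *\<^sub>R x \<in> N} = 0"
    using c by (simp add: mult_eq_0_iff)
  then show ?thesis using emeasure_affine_preimage(2)[OF S c, of a] by auto
qed

lemma J_affine_meas:
  fixes J :: "'a::euclidean_space \<Rightarrow> real"
  assumes J: "J \<in> borel_measurable lebesgue"
  shows "(\<lambda>x. J ((1 / t) *\<^sub>R (x - y))) \<in> borel_measurable lebesgue"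
proof -
  have "(\<lambda>x. J ((- (1/t) *\<^sub>R y) + (1/t) *\<^sub>R x)) \<in> borel_measurable lebesgue"
    using measurable_compose[OF affine_leb_meas J] .
  then show ?thesis by (simp add: scaleR_diff_right)
qed

lemma nonlocal_repr:
  fixes \<Omega> :: "'a::euclidean_space set" and J :: "'a \<Rightarrow> real" and t :: real
  assumes \<Omega>: "\<Omega> \<in> sets lebesgue" and J: "integrable lebesgue J" and Jnn: "\<And>z. J z \<ge> 0" and t: "t > 0"
  shows "nonlocal_J J \<Omega> t = enn2real (ennreal (t^DIM('a)) *
     (\<integral>\<^sup>+z. ennreal (J z) * emeasure lebesgue {y\<in>\<Omega>. y + t *\<^sub>R z \<notin> \<Omega>} \<partial>lebesgue))"
proof -
  have Jm[measurable]: "J \<in> borel_measurable lebesgue" using J by auto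
  obtain B Nn N where \<Omega>eq: "\<Omega> = B \<union> Nn" and NnN: "Nn \<subseteq> N" and N0: "N \<in> null_sets lborel"
    and Bb: "B \<in> sets lborel"
    using \<Omega> by (auto elim: sets_completionE)
  have N: "N \<in> null_sets lebesgue" using N0 by (rule null_sets_completionI)
  have Bb'[measurable]: "B \<in> sets borel" using Bb by simp
  have BN: "\<And>x. x \<notin> N \<Longrightarrow> (x \<in> \<Omega> \<longleftrightarrow> x \<in> B)" using \<Omega>eq NnN by auto
  have tn: "t \<noteq> 0" using t by simp
  let ?n = "DIM('a)"
  define F where "F = (\<lambda>p::'a\<times>'a. ennreal (indicator B (fst p) * indicator (- B) (fst p + t *\<^sub>R snd p) * J (snd p)))"
  have Fm[measurable]: "F \<in> borel_measurable (lebesgue \<Otimes>\<^sub>M lebesgue)"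
    unfolding F_def by measurable
  define G where "G = (\<lambda>p::'a\<times>'a. ennreal (indicator (- B) (fst p + t *\<^sub>R snd p) * J (snd p)))"
  have Gm[measurable]: "G \<in> borel_measurable (lebesgue \<Otimes>\<^sub>M lebesgue)"
    unfolding G_def by measurable
  have Jfin: "(\<integral>\<^sup>+z. ennreal (J z) \<partial>lebesgue) < \<infinity>"
    using J Jnn by (simp add: integrable_iff_bounded)
  have Gfin: "(\<integral>\<^sup>+z. G (y, z) \<partial>lebesgue) < \<infinity>" for y
  proof -
    have "(\<integral>\<^sup>+z. G (y, z) \<partial>lebesgue) \<le> (\<integral>\<^sup>+z. ennreal (J z) \<partial>lebesgue)"
      unfolding G_def using Jnn by (intro nn_integral_mono) (auto simp: indicator_def)
    then show ?thesis using Jfin by (simp add: le_less_trans)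
  qed
  have inner: "(LINT x:(- \<Omega>)|lebesgue. J ((1 / t) *\<^sub>R (x - y))) = t^?n * enn2real (\<integral>\<^sup>+z. G (y, z) \<partial>lebesgue)" for y
  proof -
    have m: "(\<lambda>x. indicator (- \<Omega>) x *\<^sub>R J ((1 / t) *\<^sub>R (x - y))) \<in> borel_measurable lebesgue"
      using J_affine_meas[OF Jm, of t y] \<Omega> by measurable
    have "(LINT x:(- \<Omega>)|lebesgue. J ((1 / t) *\<^sub>R (x - y)))
       = enn2real (\<integral>\<^sup>+x. ennreal (indicator (- \<Omega>) x *\<^sub>R J ((1 / t) *\<^sub>R (x - y))) \<partial>lebesgue)"
      unfolding set_lebesgue_integral_def
      by (rule integral_eq_nn_integral[OF m]) (auto simp: Jnn)
    also have "(\<integral>\<^sup>+x. ennreal (indicator (- \<Omega>) x *\<^sub>R J ((1 / t) *\<^sub>R (x - y))) \<partial>lebesgue)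
      = ennreal (\<bar>t\<bar>^?n) * (\<integral>\<^sup>+z. ennreal (indicator (- \<Omega>) (y + t *\<^sub>R z) *\<^sub>R J ((1 / t) *\<^sub>R ((y + t *\<^sub>R z) - y))) \<partial>lebesgue)"
      using m tn by (intro nn_integral_affine_leb) auto
    also have "(\<integral>\<^sup>+z. ennreal (indicator (- \<Omega>) (y + t *\<^sub>R z) *\<^sub>R J ((1 / t) *\<^sub>R ((y + t *\<^sub>R z) - y))) \<partial>lebesgue)
       = (\<integral>\<^sup>+z. G (y, z) \<partial>lebesgue)"
    proof (rule nn_integral_cong_AE)
      have "AE z in lebesgue. z \<notin> {z. y + t *\<^sub>R z \<in> N}"
        using null_affine_preimage[OF N tn, of y] by (rule AE_not_in)
      then show "AE z in lebesgue. ennreal (indicator (- \<Omega>) (y + t *\<^sub>R z) *\<^sub>R J ((1 / t) *\<^sub>R ((y + t *\<^sub>R z) - y))) = G (y, z)"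
        by eventually_elim (use BN tn in \<open>auto simp: G_def indicator_def\<close>)
    qed
    finally show ?thesis using t
      by (simp add: enn2real_mult)
  qed
  have inner_m: "(\<lambda>y. indicator \<Omega> y * (LINT x:(- \<Omega>)|lebesgue. J ((1 / t) *\<^sub>R (x - y)))) \<in> borel_measurable lebesgue"
  proof -
    have "(\<lambda>y. \<integral>\<^sup>+z. G (y, z) \<partial>lebesgue) \<in> borel_measurable lebesgue"
      by (rule sigma_finite_measure.borel_measurable_nn_integral_fst[OF sigma_finite_lebesgue Gm])
    then show ?thesis unfolding inner using \<Omega> by measurable
  qed
  have "nonlocal_J J \<Omega> t = enn2real (\<integral>\<^sup>+y. ennreal (indicator \<Omega> y * (LINT x:(- \<Omega>)|lebesgue. J ((1 / t) *\<^sub>R (x - y)))) \<partial>lebesgue)"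
  proof -
    have "nonlocal_J J \<Omega> t = integral\<^sup>L lebesgue (\<lambda>y. indicator \<Omega> y * (LINT x:(- \<Omega>)|lebesgue. J ((1 / t) *\<^sub>R (x - y))))"
      by (simp only: nonlocal_J_def set_lebesgue_integral_def real_scaleR_def)
    also have "\<dots> = enn2real (\<integral>\<^sup>+y. ennreal (indicator \<Omega> y * (LINT x:(- \<Omega>)|lebesgue. J ((1 / t) *\<^sub>R (x - y)))) \<partial>lebesgue)"
      by (rule integral_eq_nn_integral[OF inner_m]) (use t in \<open>auto simp: inner\<close>)
    finally show ?thesis .
  qed
  also have "(\<integral>\<^sup>+y. ennreal (indicator \<Omega> y * (LINT x:(- \<Omega>)|lebesgue. J ((1 / t) *\<^sub>R (x - y)))) \<partial>lebesgue)
     = (\<integral>\<^sup>+y. ennreal (t^?n) * (\<integral>\<^sup>+z. F (y, z) \<partial>lebesgue) \<partial>lebesgue)"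
  proof (rule nn_integral_cong_AE)
    have "AE y in lebesgue. y \<notin> N" using N by (rule AE_not_in)
    then show "AE y in lebesgue. ennreal (indicator \<Omega> y * (LINT x:(- \<Omega>)|lebesgue. J ((1 / t) *\<^sub>R (x - y)))) = ennreal (t^?n) * (\<integral>\<^sup>+z. F (y, z) \<partial>lebesgue)"
    proof eventually_elim
      case (elim y)
      show ?case
      proof (cases "y \<in> B")
        case True
        then have "y \<in> \<Omega>" using BN elim by auto
        moreover have "F (y, z) = G (y, z)" for z using True by (simp add: F_def G_def)
        ultimately show ?thesis using Gfin[of y] t
          by (simp add: inner ennreal_mult'')
      next
        case False
        then have "y \<notin> \<Omega>" using BN elim by auto
        moreover have "F (y, z) = 0" for z using False by (simp add: F_def)
        ultimately show ?thesis by simp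
      qed
    qed
  qed
  also have "\<dots> = ennreal (t^?n) * (\<integral>\<^sup>+y. (\<integral>\<^sup>+z. F (y, z) \<partial>lebesgue) \<partial>lebesgue)"
    by (rule nn_integral_cmult) (rule sigma_finite_measure.borel_measurable_nn_integral_fst[OF sigma_finite_lebesgue Fm])
  also have "(\<integral>\<^sup>+y. (\<integral>\<^sup>+z. F (y, z) \<partial>lebesgue) \<partial>lebesgue) = (\<integral>\<^sup>+z. (\<integral>\<^sup>+y. F (y, z) \<partial>lebesgue) \<partial>lebesgue)"
    by (rule leb_pair.Fubini[OF Fm, symmetric])
  also have "(\<integral>\<^sup>+z. (\<integral>\<^sup>+y. F (y, z) \<partial>lebesgue) \<partial>lebesgue)
     = (\<integral>\<^sup>+z. ennreal (J z) * emeasure lebesgue {y\<in>\<Omega>. y + t *\<^sub>R z \<notin> \<Omega>} \<partial>lebesgue)"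
  proof (rule nn_integral_cong)
    fix z
    have set1: "{y. y \<in> B \<and> y + t *\<^sub>R z \<notin> B} \<in> sets lebesgue"
    proof -
      have "{y. y \<in> B \<and> y + t *\<^sub>R z \<notin> B} = B \<inter> - {y. t *\<^sub>R z + 1 *\<^sub>R y \<in> B}" by (auto simp: add.commute)
      moreover have "{y. t *\<^sub>R z + 1 *\<^sub>R y \<in> B} \<in> sets lebesgue"
        using emeasure_affine_preimage(2)[of B 1 "t *\<^sub>R z"] Bb by simp
      ultimately show ?thesis using Bb by (auto intro!: sets.Int sets.compl_sets)
    qed
    have set2: "{y\<in>\<Omega>. y + t *\<^sub>R z \<notin> \<Omega>} \<in> sets lebesgue"
    proof -
      have "{y\<in>\<Omega>. y + t *\<^sub>R z \<notin> \<Omega>} = \<Omega> \<inter> - {y. t *\<^sub>R z + 1 *\<^sub>R y \<in> \<Omega>}" by (auto simp: add.commute)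
      moreover have "{y. t *\<^sub>R z + 1 *\<^sub>R y \<in> \<Omega>} \<in> sets lebesgue"
        using emeasure_affine_preimage(2)[of \<Omega> 1 "t *\<^sub>R z"] \<Omega> by simp
      ultimately show ?thesis using \<Omega> by (auto intro!: sets.Int sets.compl_sets)
    qed
    have "(\<integral>\<^sup>+y. F (y, z) \<partial>lebesgue) = (\<integral>\<^sup>+y. ennreal (J z) * indicator {y. y \<in> B \<and> y + t *\<^sub>R z \<notin> B} y \<partial>lebesgue)"
      by (rule nn_integral_cong) (auto simp: F_def indicator_def)
    also have "\<dots> = ennreal (J z) * emeasure lebesgue {y. y \<in> B \<and> y + t *\<^sub>R z \<notin> B}"
      using set1 by (rule nn_integral_cmult_indicator)
    also have "emeasure lebesgue {y. y \<in> B \<and> y + t *\<^sub>R z \<notin> B} = emeasure lebesgue {y\<in>\<Omega>. y + t *\<^sub>R z \<notin> \<Omega>}"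
    proof (rule emeasure_eq_AE[OF _ set1 set2])
      have "AE y in lebesgue. y \<notin> N" using N by (rule AE_not_in)
      moreover have "AE y in lebesgue. y \<notin> {y. t *\<^sub>R z + 1 *\<^sub>R y \<in> N}"
        using null_affine_preimage[OF N, of 1 "t *\<^sub>R z"] by (intro AE_not_in) simp
      ultimately show "AE y in lebesgue. (y \<in> {y. y \<in> B \<and> y + t *\<^sub>R z \<notin> B}) = (y \<in> {y\<in>\<Omega>. y + t *\<^sub>R z \<notin> \<Omega>})"
        by eventually_elim (use BN in \<open>auto simp: add.commute\<close>)
    qed
    finally show "(\<integral>\<^sup>+y. F (y, z) \<partial>lebesgue) = ennreal (J z) * emeasure lebesgue {y\<in>\<Omega>. y + t *\<^sub>R z \<notin> \<Omega>}" .
  qed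
  finally show ?thesis .
qed

lemma borel_version:
  fixes \<Omega> :: "'a::euclidean_space set"
  assumes "\<Omega> \<in> sets lebesgue"
  obtains B N where "B \<in> sets borel" "N \<in> null_sets lebesgue" "\<And>x. x \<notin> N \<Longrightarrow> (x \<in> \<Omega> \<longleftrightarrow> x \<in> B)"
proof -
  obtain B Nn N where \<Omega>eq: "\<Omega> = B \<union> Nn" and NnN: "Nn \<subseteq> N" and N0: "N \<in> null_sets lborel"
    and Bb: "B \<in> sets lborel"
    using assms by (auto elim: sets_completionE)
  have N: "N \<in> null_sets lebesgue" using N0 by (rule null_sets_completionI)
  show ?thesis using that[of B N] Bb N \<Omega>eq NnN by auto
qed

lemma shift_set_meas:
  fixes \<Omega> :: "'a::euclidean_space set"
  assumes "\<Omega> \<in> sets lebesgue"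
  shows "{y. y + w \<in> \<Omega>} \<in> sets lebesgue"
  using emeasure_affine_preimage(2)[OF assms, of 1 w] by (simp add: add.commute)

lemma A_meas:
  fixes \<Omega> :: "'a::euclidean_space set"
  assumes \<Omega>: "\<Omega> \<in> sets lebesgue"
  shows "(\<lambda>z. emeasure lebesgue {y\<in>\<Omega>. y + t *\<^sub>R z \<notin> \<Omega>}) \<in> borel_measurable lebesgue"
proof -
  obtain B N where Bb[measurable]: "B \<in> sets borel" and N: "N \<in> null_sets lebesgue"
    and BN: "\<And>x. x \<notin> N \<Longrightarrow> (x \<in> \<Omega> \<longleftrightarrow> x \<in> B)"
    using borel_version[OF \<Omega>] by blast
  define H where "H = (\<lambda>p::'a\<times>'a. indicator B (snd p) * indicator (- B) (snd p + t *\<^sub>R fst p) :: ennreal)"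
  have Hm[measurable]: "H \<in> borel_measurable (lebesgue \<Otimes>\<^sub>M lebesgue)"
    unfolding H_def by measurable
  have "(\<lambda>z. \<integral>\<^sup>+y. H (z, y) \<partial>lebesgue) \<in> borel_measurable lebesgue"
    by (rule sigma_finite_measure.borel_measurable_nn_integral_fst[OF sigma_finite_lebesgue Hm])
  moreover have "(\<integral>\<^sup>+y. H (z, y) \<partial>lebesgue) = emeasure lebesgue {y\<in>\<Omega>. y + t *\<^sub>R z \<notin> \<Omega>}" for z
  proof -
    have set1: "{y. y \<in> B \<and> y + t *\<^sub>R z \<notin> B} \<in> sets lebesgue"
      using shift_set_meas[of B "t *\<^sub>R z"] Bb
      by (subgoal_tac "{y. y \<in> B \<and> y + t *\<^sub>R z \<notin> B} = B \<inter> - {y. y + t *\<^sub>R z \<in> B}") auto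
    have set2: "{y\<in>\<Omega>. y + t *\<^sub>R z \<notin> \<Omega>} \<in> sets lebesgue"
      using shift_set_meas[OF \<Omega>, of "t *\<^sub>R z"] \<Omega>
      by (subgoal_tac "{y\<in>\<Omega>. y + t *\<^sub>R z \<notin> \<Omega>} = \<Omega> \<inter> - {y. y + t *\<^sub>R z \<in> \<Omega>}") auto
    have "(\<integral>\<^sup>+y. H (z, y) \<partial>lebesgue) = (\<integral>\<^sup>+y. indicator {y. y \<in> B \<and> y + t *\<^sub>R z \<notin> B} y \<partial>lebesgue)"
      by (rule nn_integral_cong) (auto simp: H_def indicator_def)
    also have "\<dots> = emeasure lebesgue {y. y \<in> B \<and> y + t *\<^sub>R z \<notin> B}"
      using set1 by simp
    also have "\<dots> = emeasure lebesgue {y\<in>\<Omega>. y + t *\<^sub>R z \<notin> \<Omega>}"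
    proof (rule emeasure_eq_AE[OF _ set1 set2])
      have "AE y in lebesgue. y \<notin> N" using N by (rule AE_not_in)
      moreover have "AE y in lebesgue. y \<notin> {y. t *\<^sub>R z + 1 *\<^sub>R y \<in> N}"
        using null_affine_preimage[OF N, of 1 "t *\<^sub>R z"] by (intro AE_not_in) simp
      ultimately show "AE y in lebesgue. (y \<in> {y. y \<in> B \<and> y + t *\<^sub>R z \<notin> B}) = (y \<in> {y\<in>\<Omega>. y + t *\<^sub>R z \<notin> \<Omega>})"
        by eventually_elim (use BN in \<open>auto simp: add.commute\<close>)
    qed
    finally show ?thesis .
  qed
  ultimately show ?thesis by simp
qed

lemma bounded_emeasure_finite:
  fixes S :: "'a::euclidean_space set"
  assumes "bounded S" shows "emeasure lebesgue S < \<infinity>"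
proof -
  obtain r where "\<forall>x\<in>S. norm x \<le> r" using assms unfolding bounded_iff by blast
  then have r: "S \<subseteq> cball 0 r" by auto
  have c: "cball (0::'a) r \<in> sets lebesgue" by (rule sets_completionI_sets) simp
  have "emeasure lebesgue S \<le> emeasure lebesgue (cball (0::'a) r)"
    by (rule emeasure_mono[OF r c])
  also have "\<dots> < \<infinity>" using lmeasurable_cball[of "0::'a" r] unfolding fmeasurable_def by blast
  finally show ?thesis .
qed

lemma nbhd_eq: "nbhd A r = (\<Union>a\<in>A. ball a r)"
  by (auto simp: nbhd_def dist_commute)

lemma nbhd_open: "open (nbhd A r)"
  unfolding nbhd_eq by (simp add: open_UN)

lemma nbhd_sets: "nbhd A r \<in> sets lebesgue"
proof -
  have "nbhd A r \<in> sets lborel" unfolding sets_lborel by (rule borel_open[OF nbhd_open])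
  then show ?thesis by (rule sets_completionI_sets)
qed

lemma nbhd_bounded: "bounded A \<Longrightarrow> bounded (nbhd A r)"
proof -
  assume "bounded A"
  then obtain R where "\<forall>x\<in>A. norm x \<le> R" unfolding bounded_iff by blast
  then have R: "A \<subseteq> cball 0 R" by auto
  have "nbhd A r \<subseteq> cball 0 (R + r)"
  proof
    fix x assume "x \<in> nbhd A r"
    then obtain a where "a \<in> A" "dist x a < r" by (auto simp: nbhd_def)
    then have "norm a \<le> R" "norm (x - a) < r" using R by (auto simp: dist_norm subset_iff)
    moreover have "norm x \<le> norm a + norm (x - a)" by (rule norm_triangle_sub)
    ultimately have "norm x \<le> R + r" by linarith
    then show "x \<in> cball 0 (R + r)" by simp
  qed
  then show ?thesis by (rule bounded_subset[OF bounded_cball])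
qed

lemma pointwise_lower:
  fixes \<Omega> :: "'a::euclidean_space set"
  assumes \<Omega>: "\<Omega> \<in> sets lebesgue"
   and Dh: "\<forall>x\<in>frontier \<Omega>. \<forall>r\<in>{0<..<1}. min (measure lebesgue (ball x r \<inter> \<Omega>)) (measure lebesgue (ball x r \<inter> (- \<Omega>))) \<ge> D * r ^ DIM('a)"
   and t: "t > 0" and a: "a > 0" and s1: "a * t / 2 < 1"
   and y: "y \<in> nbhd (frontier \<Omega>) (a * t / 2)"
  shows "ennreal (D * (a/2)^DIM('a)) \<le> (\<integral>\<^sup>+z. indicator (cball 0 a) z * indicator {z. (y \<in> \<Omega>) \<noteq> (y + t *\<^sub>R z \<in> \<Omega>)} z \<partial>lebesgue)"
proof -
  let ?n = "DIM('a)"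
  define s where "s = a * t / 2"
  have s0: "s > 0" "s < 1" using a t s1 by (auto simp: s_def)
  obtain x0 where x0: "x0 \<in> frontier \<Omega>" "dist y x0 < s" using y by (auto simp: nbhd_def s_def)
  define S where "S = (if y \<in> \<Omega> then ball x0 s \<inter> - \<Omega> else ball x0 s \<inter> \<Omega>)"
  have cO: "- \<Omega> \<in> sets lebesgue" using sets.compl_sets[OF \<Omega>] by (simp add: Compl_eq_Diff_UNIV)
  have Ss: "S \<in> sets lebesgue" using \<Omega> cO by (auto simp: S_def intro: sets.Int)
  have SD: "measure lebesgue S \<ge> D * s ^ ?n"
  proof -
    have "min (measure lebesgue (ball x0 s \<inter> \<Omega>)) (measure lebesgue (ball x0 s \<inter> (- \<Omega>))) \<ge> D * s ^ ?n"
      using Dh x0(1) s0 by (meson greaterThanLessThan_iff)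
    then show ?thesis unfolding S_def by (cases "y \<in> \<Omega>") (simp_all add: min_def split: if_splits)
  qed
  define Z where "Z = {z. y + t *\<^sub>R z \<in> S}"
  have tn: "t \<noteq> 0" using t by simp
  have Zs: "Z \<in> sets lebesgue" unfolding Z_def by (rule emeasure_affine_preimage(2)[OF Ss tn])
  have eq: "emeasure lebesgue S = ennreal (t ^ ?n) * emeasure lebesgue Z"
    unfolding Z_def using emeasure_affine_preimage(1)[OF Ss tn, of y] t by simp
  have Zsub: "Z \<subseteq> cball 0 a \<inter> {z. (y \<in> \<Omega>) \<noteq> (y + t *\<^sub>R z \<in> \<Omega>)}"
  proof
    fix z assume "z \<in> Z"
    then have zS: "y + t *\<^sub>R z \<in> S" by (simp add: Z_def)
    then have "dist (y + t *\<^sub>R z) x0 < s" by (auto simp: S_def split: if_splits simp: dist_commute)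
    then have "norm (t *\<^sub>R z) < 2 * s"
      using x0(2) dist_triangle[of "y + t *\<^sub>R z" y x0]
      by (simp add: dist_norm norm_minus_commute)
    then have "t * norm z < a * t" using t by (simp add: s_def)
    then have "norm z \<le> a" using t by (simp add: mult.commute)
    moreover have "(y \<in> \<Omega>) \<noteq> (y + t *\<^sub>R z \<in> \<Omega>)" using zS by (auto simp: S_def split: if_splits)
    ultimately show "z \<in> cball 0 a \<inter> {z. (y \<in> \<Omega>) \<noteq> (y + t *\<^sub>R z \<in> \<Omega>)}" by simp
  qed
  have Zfin: "emeasure lebesgue Z < \<infinity>"
    using Zsub by (intro bounded_emeasure_finite) (meson bounded_cball bounded_subset inf.boundedE)
  have Sfin: "emeasure lebesgue S < \<infinity>"
    by (intro bounded_emeasure_finite) (auto simp: S_def)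
  have "ennreal (measure lebesgue S) = ennreal (t ^ ?n * measure lebesgue Z)"
  proof -
    have "ennreal (measure lebesgue S) = emeasure lebesgue S" using Sfin by (simp add: emeasure_eq_ennreal_measure)
    also have "\<dots> = ennreal (t ^ ?n) * ennreal (measure lebesgue Z)" using eq Zfin by (simp add: emeasure_eq_ennreal_measure)
    also have "\<dots> = ennreal (t ^ ?n * measure lebesgue Z)" using t by (simp add: ennreal_mult)
    finally show ?thesis .
  qed
  then have "measure lebesgue S = t ^ ?n * measure lebesgue Z"
    using t by (simp add: ennreal_inj)
  have "D * (a/2) ^ ?n \<le> measure lebesgue Z"
  proof -
  from SD \<open>measure lebesgue S = t ^ ?n * measure lebesgue Z\<close> have 1: "D * s ^ ?n \<le> t ^ ?n * measure lebesgue Z" by simp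
  have "s = t * (a/2)" by (simp add: s_def)
  then have "s ^ ?n = t ^ ?n * (a/2) ^ ?n" by (metis power_mult_distrib)
  then have "t ^ ?n * (D * (a/2) ^ ?n) = D * s ^ ?n" by (simp add: mult_ac)
  with 1 have "t ^ ?n * (D * (a/2) ^ ?n) \<le> t ^ ?n * measure lebesgue Z" by linarith
  then show "D * (a/2) ^ ?n \<le> measure lebesgue Z" using t by (simp add: mult_le_cancel_left_pos)
  qed
  then have "ennreal (D * (a/2)^?n) \<le> emeasure lebesgue Z"
    using Zfin by (simp add: emeasure_eq_ennreal_measure)
  also have "\<dots> = (\<integral>\<^sup>+z. indicator Z z \<partial>lebesgue)" using Zs by simp
  also have "\<dots> \<le> (\<integral>\<^sup>+z. indicator (cball 0 a) z * indicator {z. (y \<in> \<Omega>) \<noteq> (y + t *\<^sub>R z \<in> \<Omega>)} z \<partial>lebesgue)"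
    using Zsub by (intro nn_integral_mono) (auto simp: indicator_def)
  finally show ?thesis .
qed

lemma diff_set_meas:
  fixes \<Omega> :: "'a::euclidean_space set"
  assumes \<Omega>: "\<Omega> \<in> sets lebesgue"
  shows "{y\<in>\<Omega>. y + w \<notin> \<Omega>} \<in> sets lebesgue" "{y. y \<notin> \<Omega> \<and> y + w \<in> \<Omega>} \<in> sets lebesgue"
proof -
  have P: "{y. y + w \<in> \<Omega>} \<in> sets lebesgue" by (rule shift_set_meas[OF \<Omega>])
  have cO: "- \<Omega> \<in> sets lebesgue" using sets.compl_sets[OF \<Omega>] by (simp add: Compl_eq_Diff_UNIV)
  have cP: "- {y. y + w \<in> \<Omega>} \<in> sets lebesgue" using sets.compl_sets[OF P] by (simp add: Compl_eq_Diff_UNIV)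
  have "{y\<in>\<Omega>. y + w \<notin> \<Omega>} = \<Omega> \<inter> - {y. y + w \<in> \<Omega>}" by auto
  then show "{y\<in>\<Omega>. y + w \<notin> \<Omega>} \<in> sets lebesgue" using \<Omega> cP by (simp add: sets.Int)
  have "{y. y \<notin> \<Omega> \<and> y + w \<in> \<Omega>} = - \<Omega> \<inter> {y. y + w \<in> \<Omega>}" by auto
  then show "{y. y \<notin> \<Omega> \<and> y + w \<in> \<Omega>} \<in> sets lebesgue" using cO P by (simp add: sets.Int)
qed

lemma A_sym:
  fixes \<Omega> :: "'a::euclidean_space set"
  assumes \<Omega>: "\<Omega> \<in> sets lebesgue" and fin: "emeasure lebesgue \<Omega> < \<infinity>"
  shows "emeasure lebesgue {y\<in>\<Omega>. y + w \<notin> \<Omega>} = emeasure lebesgue {y. y \<notin> \<Omega> \<and> y + w \<in> \<Omega>}"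
proof -
  define P where "P = {y. y + w \<in> \<Omega>}"
  have P: "P \<in> sets lebesgue" unfolding P_def by (rule shift_set_meas[OF \<Omega>])
  have "emeasure lebesgue \<Omega> = ennreal (\<bar>1\<bar>^DIM('a)) * emeasure lebesgue {x. w + 1 *\<^sub>R x \<in> \<Omega>}"
    by (rule emeasure_affine_preimage(1)[OF \<Omega>]) simp
  then have PO: "emeasure lebesgue P = emeasure lebesgue \<Omega>" by (simp add: P_def add.commute)
  have IP: "\<Omega> \<inter> P \<in> sets lebesgue" using \<Omega> P by simp
  have Ifin: "emeasure lebesgue (\<Omega> \<inter> P) \<noteq> \<infinity>"
    using emeasure_mono[of "\<Omega> \<inter> P" \<Omega> lebesgue] \<Omega> fin by auto
  have "{y\<in>\<Omega>. y + w \<notin> \<Omega>} = \<Omega> - (\<Omega> \<inter> P)" by (auto simp: P_def)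
  then have 1: "emeasure lebesgue {y\<in>\<Omega>. y + w \<notin> \<Omega>} = emeasure lebesgue \<Omega> - emeasure lebesgue (\<Omega> \<inter> P)"
    using emeasure_Diff[OF Ifin \<Omega> IP] by simp
  have "{y. y \<notin> \<Omega> \<and> y + w \<in> \<Omega>} = P - (\<Omega> \<inter> P)" by (auto simp: P_def)
  then have 2: "emeasure lebesgue {y. y \<notin> \<Omega> \<and> y + w \<in> \<Omega>} = emeasure lebesgue P - emeasure lebesgue (\<Omega> \<inter> P)"
    using emeasure_Diff[OF Ifin P IP] by simp
  show ?thesis using 1 2 PO by simp
qed

lemma A_borel_eq:
  fixes \<Omega> B N :: "'a::euclidean_space set"
  assumes \<Omega>: "\<Omega> \<in> sets lebesgue" and Bb: "B \<in> sets borel" and N: "N \<in> null_sets lebesgue"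
    and BN: "\<And>x. x \<notin> N \<Longrightarrow> (x \<in> \<Omega> \<longleftrightarrow> x \<in> B)"
  shows "emeasure lebesgue {y\<in>B. y + w \<notin> B} = emeasure lebesgue {y\<in>\<Omega>. y + w \<notin> \<Omega>}"
proof (rule emeasure_eq_AE)
  have B: "B \<in> sets lebesgue" using Bb by simp
  show "{y\<in>B. y + w \<notin> B} \<in> sets lebesgue" by (rule diff_set_meas(1)[OF B])
  show "{y\<in>\<Omega>. y + w \<notin> \<Omega>} \<in> sets lebesgue" by (rule diff_set_meas(1)[OF \<Omega>])
  have "AE y in lebesgue. y \<notin> N" using N by (rule AE_not_in)
  moreover have "AE y in lebesgue. y \<notin> {y. w + 1 *\<^sub>R y \<in> N}"
    using null_affine_preimage[OF N, of 1 w] by (intro AE_not_in) simp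
  ultimately show "AE y in lebesgue. (y \<in> {y\<in>B. y + w \<notin> B}) = (y \<in> {y\<in>\<Omega>. y + w \<notin> \<Omega>})"
    by eventually_elim (use BN in \<open>auto simp: add.commute\<close>)
qed

lemma lower_integral:
  fixes \<Omega> :: "'a::euclidean_space set"
  assumes \<Omega>: "\<Omega> \<in> sets lebesgue" and fin: "emeasure lebesgue \<Omega> < \<infinity>"
   and Dh: "\<forall>x\<in>frontier \<Omega>. \<forall>r\<in>{0<..<1}. min (measure lebesgue (ball x r \<inter> \<Omega>)) (measure lebesgue (ball x r \<inter> (- \<Omega>))) \<ge> D * r ^ DIM('a)"
   and t: "t > 0" and a: "a > 0" and s1: "a * t / 2 < 1"
  shows "ennreal (D * (a/2)^DIM('a)) * emeasure lebesgue (nbhd (frontier \<Omega>) (a * t / 2))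
     \<le> 2 * (\<integral>\<^sup>+z. indicator (cball 0 a) z * emeasure lebesgue {y\<in>\<Omega>. y + t *\<^sub>R z \<notin> \<Omega>} \<partial>lebesgue)"
proof -
  obtain B N where Bb[measurable]: "B \<in> sets borel" and N: "N \<in> null_sets lebesgue"
    and BN: "\<And>x. x \<notin> N \<Longrightarrow> (x \<in> \<Omega> \<longleftrightarrow> x \<in> B)"
    using borel_version[OF \<Omega>] by blast
  have B: "B \<in> sets lebesgue" using Bb by simp
  have tn: "t \<noteq> 0" using t by simp
  have Bfin: "emeasure lebesgue B < \<infinity>"
  proof -
    have "emeasure lebesgue B = emeasure lebesgue \<Omega>"
    proof (rule emeasure_eq_AE[OF _ B \<Omega>])
      show "AE y in lebesgue. (y \<in> B) = (y \<in> \<Omega>)"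
        using AE_not_in[OF N] by eventually_elim (simp add: BN)
    qed
    then show ?thesis using fin by simp
  qed
  let ?K = "ennreal (D * (a/2)^DIM('a))"
  let ?A = "\<lambda>z. emeasure lebesgue {y\<in>\<Omega>. y + t *\<^sub>R z \<notin> \<Omega>}"
  have cb[measurable]: "cball (0::'a) a \<in> sets borel" by simp
  define H where "H = (\<lambda>p::'a\<times>'a. ennreal (indicator (cball 0 a) (snd p) *
     (indicator B (fst p) * indicator (- B) (fst p + t *\<^sub>R snd p) + indicator (- B) (fst p) * indicator B (fst p + t *\<^sub>R snd p))))"
  have Hm[measurable]: "H \<in> borel_measurable (lebesgue \<Otimes>\<^sub>M lebesgue)"
    unfolding H_def by measurable
  have "?K * emeasure lebesgue (nbhd (frontier \<Omega>) (a * t / 2)) = (\<integral>\<^sup>+y. ?K * indicator (nbhd (frontier \<Omega>) (a * t / 2)) y \<partial>lebesgue)"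
    by (rule nn_integral_cmult_indicator[symmetric]) (rule nbhd_sets)
  also have "\<dots> \<le> (\<integral>\<^sup>+y. (\<integral>\<^sup>+z. indicator (cball 0 a) z * indicator {z. (y \<in> \<Omega>) \<noteq> (y + t *\<^sub>R z \<in> \<Omega>)} z \<partial>lebesgue) \<partial>lebesgue)"
  proof (rule nn_integral_mono)
    fix y
    show "?K * indicator (nbhd (frontier \<Omega>) (a * t / 2)) y \<le> (\<integral>\<^sup>+z. indicator (cball 0 a) z * indicator {z. (y \<in> \<Omega>) \<noteq> (y + t *\<^sub>R z \<in> \<Omega>)} z \<partial>lebesgue)"
    proof (cases "y \<in> nbhd (frontier \<Omega>) (a * t / 2)")
      case True
      then show ?thesis using pointwise_lower[OF \<Omega> Dh t a s1 True] by simp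
    next
      case False
      then show ?thesis by simp
    qed
  qed
  also have "\<dots> = (\<integral>\<^sup>+y. (\<integral>\<^sup>+z. H (y, z) \<partial>lebesgue) \<partial>lebesgue)"
  proof (rule nn_integral_cong_AE)
    have "AE y in lebesgue. y \<notin> N" using N by (rule AE_not_in)
    then show "AE y in lebesgue. (\<integral>\<^sup>+z. indicator (cball 0 a) z * indicator {z. (y \<in> \<Omega>) \<noteq> (y + t *\<^sub>R z \<in> \<Omega>)} z \<partial>lebesgue) = (\<integral>\<^sup>+z. H (y, z) \<partial>lebesgue)"
    proof eventually_elim
      case (elim y)
      show ?case
      proof (rule nn_integral_cong_AE)
        have "AE z in lebesgue. z \<notin> {z. y + t *\<^sub>R z \<in> N}"
          using null_affine_preimage[OF N tn, of y] by (rule AE_not_in)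
        then show "AE z in lebesgue. indicator (cball 0 a) z * indicator {z. (y \<in> \<Omega>) \<noteq> (y + t *\<^sub>R z \<in> \<Omega>)} z = H (y, z)"
        proof eventually_elim
          case (elim z)
          then have e1: "(y + t *\<^sub>R z \<in> \<Omega>) = (y + t *\<^sub>R z \<in> B)" using BN by simp
          have e2: "(y \<in> \<Omega>) = (y \<in> B)" using BN \<open>y \<notin> N\<close> by simp
          show ?case unfolding H_def
            by (cases "z \<in> cball 0 a"; cases "y \<in> B"; cases "y + t *\<^sub>R z \<in> B") (simp_all add: indicator_def e1 e2)
        qed
      qed
    qed
  qed
  also have "\<dots> = (\<integral>\<^sup>+z. (\<integral>\<^sup>+y. H (y, z) \<partial>lebesgue) \<partial>lebesgue)"
    by (rule leb_pair.Fubini[OF Hm, symmetric])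
  also have "\<dots> = (\<integral>\<^sup>+z. 2 * (indicator (cball 0 a) z * ?A z) \<partial>lebesgue)"
  proof (rule nn_integral_cong)
    fix z :: 'a
    let ?w = "t *\<^sub>R z"
    have s1: "{y\<in>B. y + ?w \<notin> B} \<in> sets lebesgue" by (rule diff_set_meas(1)[OF B])
    have s2: "{y. y \<notin> B \<and> y + ?w \<in> B} \<in> sets lebesgue" by (rule diff_set_meas(2)[OF B])
    have "(\<integral>\<^sup>+y. H (y, z) \<partial>lebesgue) = (\<integral>\<^sup>+y. indicator (cball 0 a) z * indicator {y\<in>B. y + ?w \<notin> B} y + indicator (cball 0 a) z * indicator {y. y \<notin> B \<and> y + ?w \<in> B} y \<partial>lebesgue)"
    proof (rule nn_integral_cong)
      fix y
      show "H (y, z) = indicator (cball 0 a) z * indicator {y\<in>B. y + ?w \<notin> B} y + indicator (cball 0 a) z * indicator {y. y \<notin> B \<and> y + ?w \<in> B} y"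
        unfolding H_def
        by (cases "z \<in> cball 0 a"; cases "y \<in> B"; cases "y + t *\<^sub>R z \<in> B") (simp_all add: indicator_def)
    qed
    also have "\<dots> = indicator (cball 0 a) z * emeasure lebesgue {y\<in>B. y + ?w \<notin> B} + indicator (cball 0 a) z * emeasure lebesgue {y. y \<notin> B \<and> y + ?w \<in> B}"
    proof -
      have m1: "(\<lambda>y. indicator (cball 0 a) z * indicator {y\<in>B. y + ?w \<notin> B} y :: ennreal) \<in> borel_measurable lebesgue"
        using s1 by (intro borel_measurable_times_ennreal borel_measurable_const borel_measurable_indicator)
      have m2: "(\<lambda>y. indicator (cball 0 a) z * indicator {y. y \<notin> B \<and> y + ?w \<in> B} y :: ennreal) \<in> borel_measurable lebesgue"
        using s2 by (intro borel_measurable_times_ennreal borel_measurable_const borel_measurable_indicator)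
      show ?thesis
        by (simp only: nn_integral_add[OF m1 m2] nn_integral_cmult_indicator[OF s1] nn_integral_cmult_indicator[OF s2])
    qed
    also have "emeasure lebesgue {y. y \<notin> B \<and> y + ?w \<in> B} = emeasure lebesgue {y\<in>B. y + ?w \<notin> B}"
      using A_sym[OF B Bfin, of ?w] by simp
    also have "emeasure lebesgue {y\<in>B. y + ?w \<notin> B} = ?A z"
      by (rule A_borel_eq[OF \<Omega> Bb N BN])
    finally show "(\<integral>\<^sup>+y. H (y, z) \<partial>lebesgue) = 2 * (indicator (cball 0 a) z * ?A z)"
      by (simp add: mult_2)
  qed
  also have "\<dots> = 2 * (\<integral>\<^sup>+z. indicator (cball 0 a) z * ?A z \<partial>lebesgue)"
  proof (rule nn_integral_cmult)
    have "cball (0::'a) a \<in> sets lebesgue" by (rule sets_completionI_sets) simp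
    then have "(indicator (cball (0::'a) a) :: 'a \<Rightarrow> ennreal) \<in> borel_measurable lebesgue"
      by (rule borel_measurable_indicator)
    then show "(\<lambda>z. indicator (cball 0 a) z * ?A z) \<in> borel_measurable lebesgue"
      using A_meas[OF \<Omega>, of t] by (rule borel_measurable_times_ennreal)
  qed
  finally show ?thesis .
qed

lemma A_le_Omega:
  fixes \<Omega> :: "'a::euclidean_space set"
  assumes "\<Omega> \<in> sets lebesgue"
  shows "emeasure lebesgue {y\<in>\<Omega>. y + w \<notin> \<Omega>} \<le> emeasure lebesgue \<Omega>"
  by (rule emeasure_mono[OF _ assms]) auto

lemma A_zero:
  fixes \<Omega> :: "'a::euclidean_space set"
  shows "emeasure lebesgue {y\<in>\<Omega>. y + 0 \<notin> \<Omega>} = 0"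
  by simp

lemma A_le_nbhd:
  fixes \<Omega> :: "'a::euclidean_space set"
  assumes "w \<noteq> 0"
  shows "emeasure lebesgue {y\<in>\<Omega>. y + w \<notin> \<Omega>} \<le> emeasure lebesgue (nbhd (frontier \<Omega>) (2 * norm w))"
proof (rule emeasure_mono[OF _ nbhd_sets])
  show "{y\<in>\<Omega>. y + w \<notin> \<Omega>} \<subseteq> nbhd (frontier \<Omega>) (2 * norm w)"
  proof
    fix y assume y: "y \<in> {y\<in>\<Omega>. y + w \<notin> \<Omega>}"
    have "closed_segment y (y + w) \<inter> frontier \<Omega> \<noteq> {}"
    proof (rule connected_Int_frontier)
      show "connected (closed_segment y (y + w))" by (rule connected_segment)
      show "closed_segment y (y + w) \<inter> \<Omega> \<noteq> {}" using y by auto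
      show "closed_segment y (y + w) - \<Omega> \<noteq> {}" using y by auto
    qed
    then obtain p where p: "p \<in> closed_segment y (y + w)" "p \<in> frontier \<Omega>" by blast
    have "dist y p \<le> dist y (y + w)" using dist_in_closed_segment[OF p(1)] by (simp add: dist_commute)
    also have "\<dots> = norm w" by (simp add: dist_norm)
    also have "\<dots> < 2 * norm w" using assms by simp
    finally show "y \<in> nbhd (frontier \<Omega>) (2 * norm w)" using p(2) by (auto simp: nbhd_def)
  qed
qed

lemma norm_powr_le:
  fixes z :: "'a::real_normed_vector"
  assumes "0 \<le> g" "g \<le> real n"
  shows "norm z powr g \<le> 1 + norm z ^ n"
proof (cases "norm z \<le> 1")
  case True
  then have "norm z powr g \<le> 1" using assms by (intro powr_le1) auto
  moreover have "0 \<le> norm z ^ n" by simp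
  ultimately show ?thesis by linarith
next
  case False
  then have "norm z powr g \<le> norm z powr real n" using assms by (intro powr_mono) auto
  also have "\<dots> = norm z ^ n" using False by (intro powr_realpow) auto
  finally show ?thesis by simp
qed

lemma Jpow_integrable:
  fixes J :: "'a::euclidean_space \<Rightarrow> real"
  assumes J: "integrable lebesgue J" and Jn: "integrable lebesgue (\<lambda>z. J z * norm z ^ DIM('a))"
    and Jnn: "\<And>z. J z \<ge> 0" and g: "0 \<le> g" "g \<le> real DIM('a)"
  shows "integrable lebesgue (\<lambda>z. J z * norm z powr g)"
proof (rule Bochner_Integration.integrable_bound)
  show "integrable lebesgue (\<lambda>z. J z + J z * norm z ^ DIM('a))" using J Jn by simp
  have "J \<in> borel_measurable lebesgue" using J by auto
  moreover have "(\<lambda>z::'a. norm z powr g) \<in> borel_measurable lebesgue"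
    by (rule powr_real_measurable[OF measurable_compose[OF id_leb_borel borel_measurable_norm]]) simp
  ultimately show "(\<lambda>z. J z * norm z powr g) \<in> borel_measurable lebesgue" by (rule borel_measurable_times)
  show "AE z in lebesgue. norm (J z * norm z powr g) \<le> norm (J z + J z * norm z ^ DIM('a))"
  proof (rule AE_I2)
    fix z :: 'a
    have "J z * norm z powr g \<le> J z * (1 + norm z ^ DIM('a))"
      using Jnn[of z] norm_powr_le[OF g, of z] by (intro mult_left_mono) auto
    moreover have "J z * (1 + norm z ^ DIM('a)) = J z + J z * norm z ^ DIM('a)" by (simp add: distrib_left)
    moreover have "0 \<le> J z * norm z powr g" using Jnn[of z] by simp
    moreover have "0 \<le> J z + J z * norm z ^ DIM('a)" using Jnn[of z] by simp
    ultimately show "norm (J z * norm z powr g) \<le> norm (J z + J z * norm z ^ DIM('a))"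
      by (simp only: real_norm_def abs_of_nonneg)
  qed
qed

lemma tail_tendsto:
  fixes g :: "'a::euclidean_space \<Rightarrow> real"
  assumes g: "integrable lebesgue g"
  shows "((\<lambda>R. LINT z|lebesgue. g z * indicator {z. R \<le> norm z} z) \<longlongrightarrow> 0) at_top"
proof -
  have gm: "g \<in> borel_measurable lebesgue" using g by auto
  define s where "s = (\<lambda>(R::real) z. g z * indicator {z. R \<le> norm z} z)"
  have 1: "(\<lambda>z. 0::real) \<in> borel_measurable lebesgue" by simp
  have 2: "s R \<in> borel_measurable lebesgue" for R
  proof -
    have "{z::'a. R \<le> norm z} \<in> sets lebesgue"
    proof -
      have "closed {z::'a. R \<le> norm z}" by (intro closed_Collect_le continuous_intros)
      then have "{z::'a. R \<le> norm z} \<in> sets lborel" by (simp add: borel_closed)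
      then show ?thesis by (rule sets_completionI_sets)
    qed
    then have "(indicator {z::'a. R \<le> norm z} :: 'a \<Rightarrow> real) \<in> borel_measurable lebesgue"
      by (rule borel_measurable_indicator)
    with gm show ?thesis unfolding s_def by (rule borel_measurable_times)
  qed
  have 3: "integrable lebesgue (\<lambda>z. norm (g z))" using g by simp
  have 4: "AE z in lebesgue. ((\<lambda>R. s R z) \<longlongrightarrow> 0) at_top"
  proof (rule AE_I2)
    fix z :: 'a
    have "eventually (\<lambda>R. s R z = 0) at_top"
      using eventually_gt_at_top[of "norm z"] by eventually_elim (simp add: s_def indicator_def)
    then show "((\<lambda>R. s R z) \<longlongrightarrow> 0) at_top"
      by (rule tendsto_eventually)
  qed
  have 5: "\<forall>\<^sub>F R in at_top. AE z in lebesgue. norm (s R z) \<le> norm (g z)"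
  proof (intro always_eventually allI AE_I2)
    fix R and z :: 'a
    show "norm (s R z) \<le> norm (g z)"
      by (cases "R \<le> norm z") (simp_all add: s_def indicator_def)
  qed
  have "((\<lambda>R. integral\<^sup>L lebesgue (s R)) \<longlongrightarrow> integral\<^sup>L lebesgue (\<lambda>z::'a. 0::real)) at_top"
    by (rule integral_dominated_convergence_at_top[OF 1 2 3 4 5])
  then show ?thesis unfolding s_def by (simp only: integral_zero)
qed

lemma A_ind_meas:
  fixes \<Omega> :: "'a::euclidean_space set"
  assumes \<Omega>: "\<Omega> \<in> sets lebesgue"
  shows "(\<lambda>z. indicator (cball 0 a) z * emeasure lebesgue {y\<in>\<Omega>. y + t *\<^sub>R z \<notin> \<Omega>}) \<in> borel_measurable lebesgue"
proof -
  have "cball (0::'a) a \<in> sets lebesgue" by (rule sets_completionI_sets) simp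
  then have "(indicator (cball (0::'a) a) :: 'a \<Rightarrow> ennreal) \<in> borel_measurable lebesgue"
    by (rule borel_measurable_indicator)
  then show ?thesis
    using A_meas[OF \<Omega>, of t] by (rule borel_measurable_times_ennreal)
qed

lemma I_finite:
  fixes \<Omega> :: "'a::euclidean_space set" and J :: "'a \<Rightarrow> real"
  assumes \<Omega>: "\<Omega> \<in> sets lebesgue" and fin: "emeasure lebesgue \<Omega> < \<infinity>"
    and J: "integrable lebesgue J" and Jnn: "\<And>z. J z \<ge> 0"
  shows "(\<integral>\<^sup>+z. ennreal (J z) * emeasure lebesgue {y\<in>\<Omega>. y + t *\<^sub>R z \<notin> \<Omega>} \<partial>lebesgue) < \<infinity>"
proof -
  have Jm: "(\<lambda>z. ennreal (J z)) \<in> borel_measurable lebesgue" using J by auto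
  have "(\<integral>\<^sup>+z. ennreal (J z) * emeasure lebesgue {y\<in>\<Omega>. y + t *\<^sub>R z \<notin> \<Omega>} \<partial>lebesgue)
     \<le> (\<integral>\<^sup>+z. ennreal (J z) * emeasure lebesgue \<Omega> \<partial>lebesgue)"
    by (intro nn_integral_mono mult_left_mono A_le_Omega[OF \<Omega>]) simp
  also have "\<dots> = (\<integral>\<^sup>+z. ennreal (J z) \<partial>lebesgue) * emeasure lebesgue \<Omega>"
    by (rule nn_integral_multc[OF Jm])
  also have "\<dots> < \<infinity>"
  proof -
    have "(\<integral>\<^sup>+z. ennreal (J z) \<partial>lebesgue) < \<infinity>"
      using J Jnn by (simp add: integrable_iff_bounded)
    then show ?thesis using fin by (simp add: ennreal_mult_less_top)
  qed
  finally show ?thesis .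
qed

lemma lower_main:
  fixes \<Omega> :: "'a::euclidean_space set" and J :: "'a \<Rightarrow> real"
  assumes \<Omega>: "\<Omega> \<in> sets lebesgue" and bd: "bounded \<Omega>"
   and Dh: "\<forall>x\<in>frontier \<Omega>. \<forall>r\<in>{0<..<1}. min (measure lebesgue (ball x r \<inter> \<Omega>)) (measure lebesgue (ball x r \<inter> (- \<Omega>))) \<ge> D * r ^ DIM('a)"
   and D: "D > 0"
   and J: "integrable lebesgue J" and Jnn: "\<And>z. J z \<ge> 0"
   and cJ: "cJ > 0" and a: "a > 0" and Jc: "\<And>z. norm z \<le> a \<Longrightarrow> J z \<ge> cJ"
   and t: "t > 0" and s1: "a * t / 2 < 1"
  shows "t ^ DIM('a) * (cJ * D * (a/2) ^ DIM('a) / 2) * measure lebesgue (nbhd (frontier \<Omega>) (a * t / 2)) \<le> nonlocal_J J \<Omega> t"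
proof -
  let ?n = "DIM('a)"
  let ?A = "\<lambda>z. emeasure lebesgue {y\<in>\<Omega>. y + t *\<^sub>R z \<notin> \<Omega>}"
  define I where "I = (\<integral>\<^sup>+z. ennreal (J z) * ?A z \<partial>lebesgue)"
  define X where "X = (\<integral>\<^sup>+z. indicator (cball 0 a) z * ?A z \<partial>lebesgue)"
  define V where "V = measure lebesgue (nbhd (frontier \<Omega>) (a * t / 2))"
  have fin: "emeasure lebesgue \<Omega> < \<infinity>" by (rule bounded_emeasure_finite[OF bd])
  have rep: "nonlocal_J J \<Omega> t = enn2real (ennreal (t ^ ?n) * I)"
    unfolding I_def by (rule nonlocal_repr[OF \<Omega> J Jnn t])
  have Ifin: "I < \<infinity>" unfolding I_def by (rule I_finite[OF \<Omega> fin J Jnn])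
  have cX: "ennreal cJ * X \<le> I"
  proof -
    have "ennreal cJ * X = (\<integral>\<^sup>+z. ennreal cJ * (indicator (cball 0 a) z * ?A z) \<partial>lebesgue)"
      unfolding X_def by (rule nn_integral_cmult[symmetric]) (rule A_ind_meas[OF \<Omega>])
    also have "\<dots> \<le> I" unfolding I_def
    proof (rule nn_integral_mono)
      fix z :: 'a
      show "ennreal cJ * (indicator (cball 0 a) z * ?A z) \<le> ennreal (J z) * ?A z"
      proof (cases "norm z \<le> a")
        case True
        have "ennreal cJ \<le> ennreal (J z)" using Jc[OF True] by (rule ennreal_leI)
        then show ?thesis using True by (simp add: mult_right_mono)
      next
        case False
        then show ?thesis by simp
      qed
    qed
    finally show ?thesis .
  qed
  have Xfin: "X < \<infinity>"
  proof -
    have "ennreal cJ * X < \<infinity>" by (rule le_less_trans[OF cX Ifin])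
    then show ?thesis using cJ by (auto simp: ennreal_mult_less_top)
  qed
  have Vfin: "emeasure lebesgue (nbhd (frontier \<Omega>) (a * t / 2)) = ennreal V"
  proof -
    have "bounded (frontier \<Omega>)"
      by (rule bounded_subset[OF bounded_closure[OF bd]]) (auto simp: frontier_def)
    then have "emeasure lebesgue (nbhd (frontier \<Omega>) (a * t / 2)) < \<infinity>"
      by (rule bounded_emeasure_finite[OF nbhd_bounded])
    then show ?thesis unfolding V_def by (simp add: emeasure_eq_ennreal_measure)
  qed
  have low: "ennreal (D * (a/2)^?n) * ennreal V \<le> 2 * X"
    using lower_integral[OF \<Omega> fin Dh t a s1] unfolding X_def Vfin .
  define x where "x = enn2real X"
  define i where "i = enn2real I"
  have x0: "x \<ge> 0" and i0: "i \<ge> 0" by (simp_all add: x_def i_def)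
  have Xx: "X = ennreal x" using Xfin by (simp add: x_def)
  have Ii: "I = ennreal i" using Ifin by (simp add: i_def)
  have V0: "V \<ge> 0" by (simp add: V_def)
  have e1: "ennreal (D * (a/2)^?n) * ennreal V = ennreal (D * (a/2)^?n * V)"
    using D a V0 by (simp add: ennreal_mult)
  have e2: "2 * ennreal x = ennreal (2 * x)"
    using x0 by (simp add: ennreal_mult)
  have "ennreal (D * (a/2)^?n * V) \<le> ennreal (2 * x)"
    using low unfolding Xx e1 e2 .
  then have 1: "D * (a/2)^?n * V \<le> 2 * x" using x0 by (simp add: ennreal_le_iff)
  have e3: "ennreal cJ * ennreal x = ennreal (cJ * x)"
    using cJ x0 by (simp add: ennreal_mult)
  have "ennreal (cJ * x) \<le> ennreal i" using cX unfolding Xx Ii e3 .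
  then have 2: "cJ * x \<le> i" using i0 by (simp add: ennreal_le_iff)
  have e4: "ennreal (t ^ ?n) * ennreal i = ennreal (t ^ ?n * i)"
    using t i0 by (simp add: ennreal_mult)
  have 3: "nonlocal_J J \<Omega> t = t ^ ?n * i"
  proof -
    have "nonlocal_J J \<Omega> t = enn2real (ennreal (t ^ ?n * i))" using rep unfolding Ii e4 .
    also have "\<dots> = t ^ ?n * i" using t i0 by simp
    finally show ?thesis .
  qed
  have 4: "cJ * D * (a/2) ^ ?n / 2 * V \<le> i"
  proof -
    have "cJ * (D * (a/2)^?n * V) \<le> cJ * (2 * x)" using 1 cJ by (intro mult_left_mono) auto
    moreover have "cJ * D * (a/2) ^ ?n / 2 * V = cJ * (D * (a/2)^?n * V) / 2" by simp
    moreover have "cJ * (2 * x) = 2 * (cJ * x)" by simp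
    ultimately show ?thesis using 2 by linarith
  qed
  have "t ^ ?n * (cJ * D * (a/2) ^ ?n / 2 * V) \<le> t ^ ?n * i"
    by (rule mult_left_mono[OF 4]) (use t in simp)
  moreover have "t ^ ?n * (cJ * D * (a/2) ^ ?n / 2) * V = t ^ ?n * (cJ * D * (a/2) ^ ?n / 2 * V)"
    by (simp only: mult.assoc)
  ultimately show ?thesis unfolding 3 V_def[symmetric] by simp
qed

lemma upper_pointwise_A:
  fixes \<Omega> :: "'a::euclidean_space set"
  assumes \<Omega>: "\<Omega> \<in> sets lebesgue" and bd: "bounded \<Omega>"
   and g: "0 \<le> \<gamma>" and t: "t > 0" and \<delta>: "\<delta> > 0" and M': "M' \<ge> 0"
   and hyp: "\<And>s. 0 < s \<Longrightarrow> s < \<delta> \<Longrightarrow> measure lebesgue (nbhd (frontier \<Omega>) s) \<le> M' * s powr \<gamma>"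
  shows "emeasure lebesgue {y\<in>\<Omega>. y + t *\<^sub>R z \<notin> \<Omega>} \<le> ennreal (t powr \<gamma> * (M' * 2 powr \<gamma> * norm z powr \<gamma>
      + measure lebesgue \<Omega> * (2/\<delta>) powr \<gamma> * (norm z powr \<gamma> * indicator {z. \<delta>/(2*t) \<le> norm z} z)))"
proof -
  define q where "q = norm z"
  have q0: "q \<ge> 0" by (simp add: q_def)
  define P1 where "P1 = M' * 2 powr \<gamma> * q powr \<gamma>"
  define P2 where "P2 = measure lebesgue \<Omega> * (2/\<delta>) powr \<gamma> * (q powr \<gamma> * indicator {z. \<delta>/(2*t) \<le> norm z} z)"
  have P1: "P1 \<ge> 0" using M' by (simp add: P1_def)
  have P2: "P2 \<ge> 0" by (simp add: P2_def)
  have tg: "t powr \<gamma> \<ge> 0" by simp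
  have fin: "emeasure lebesgue \<Omega> < \<infinity>" by (rule bounded_emeasure_finite[OF bd])
  have goal: "emeasure lebesgue {y\<in>\<Omega>. y + t *\<^sub>R z \<notin> \<Omega>} \<le> ennreal (t powr \<gamma> * (P1 + P2))"
  proof (cases "z = 0")
    case True
    then show ?thesis by simp
  next
    case False
    then have qpos: "q > 0" by (simp add: q_def)
    show ?thesis
    proof (cases "2 * t * q < \<delta>")
      case True
      have w0: "t *\<^sub>R z \<noteq> 0" using False t by simp
      have nw: "norm (t *\<^sub>R z) = t * q" using t by (simp add: q_def)
      have bf: "bounded (frontier \<Omega>)"
        by (rule bounded_subset[OF bounded_closure[OF bd]]) (auto simp: frontier_def)
      have "emeasure lebesgue {y\<in>\<Omega>. y + t *\<^sub>R z \<notin> \<Omega>} \<le> emeasure lebesgue (nbhd (frontier \<Omega>) (2 * (t * q)))"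
        using A_le_nbhd[OF w0, of \<Omega>] unfolding nw .
      also have "\<dots> = ennreal (measure lebesgue (nbhd (frontier \<Omega>) (2 * (t * q))))"
      proof -
        have "emeasure lebesgue (nbhd (frontier \<Omega>) (2 * (t * q))) < \<infinity>"
          by (rule bounded_emeasure_finite[OF nbhd_bounded[OF bf]])
        then show ?thesis by (simp add: emeasure_eq_ennreal_measure)
      qed
      also have "\<dots> \<le> ennreal (t powr \<gamma> * (P1 + P2))"
      proof (rule ennreal_leI)
        have "measure lebesgue (nbhd (frontier \<Omega>) (2 * (t * q))) \<le> M' * (2 * (t * q)) powr \<gamma>"
          using hyp[of "2 * (t * q)"] True t qpos by (simp add: mult.assoc)
        also have "(2 * (t * q)) powr \<gamma> = 2 powr \<gamma> * (t powr \<gamma> * q powr \<gamma>)"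
          by (simp only: powr_mult)
        also have "M' * (2 powr \<gamma> * (t powr \<gamma> * q powr \<gamma>)) = t powr \<gamma> * P1"
          by (simp add: P1_def mult_ac)
        also have "\<dots> \<le> t powr \<gamma> * (P1 + P2)" using P2 tg by (simp add: mult_left_mono)
        finally show "measure lebesgue (nbhd (frontier \<Omega>) (2 * (t * q))) \<le> t powr \<gamma> * (P1 + P2)" .
      qed
      finally show ?thesis .
    next
      case False
      then have Rq: "\<delta>/(2*t) \<le> q" using t by (simp add: field_simps)
      then have ind: "indicator {z. \<delta>/(2*t) \<le> norm z} z = (1::real)" by (simp add: q_def)
      have "emeasure lebesgue {y\<in>\<Omega>. y + t *\<^sub>R z \<notin> \<Omega>} \<le> emeasure lebesgue \<Omega>"
        by (rule A_le_Omega[OF \<Omega>])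
      also have "\<dots> = ennreal (measure lebesgue \<Omega>)" using fin by (simp add: emeasure_eq_ennreal_measure)
      also have "\<dots> \<le> ennreal (t powr \<gamma> * (P1 + P2))"
      proof (rule ennreal_leI)
        have ge1: "1 \<le> (2 * t * q / \<delta>)" using False \<delta> by simp
        have "measure lebesgue \<Omega> = measure lebesgue \<Omega> * 1" by simp
        also have "\<dots> \<le> measure lebesgue \<Omega> * (2 * t * q / \<delta>) powr \<gamma>"
          by (rule mult_left_mono) (use ge1 g in \<open>simp_all add: ge_one_powr_ge_zero\<close>)
        also have "(2 * t * q / \<delta>) = (2/\<delta>) * (t * q)" by simp
        also have "((2/\<delta>) * (t * q)) powr \<gamma> = (2/\<delta>) powr \<gamma> * (t powr \<gamma> * q powr \<gamma>)"
          by (simp only: powr_mult)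
        also have "measure lebesgue \<Omega> * ((2/\<delta>) powr \<gamma> * (t powr \<gamma> * q powr \<gamma>)) = t powr \<gamma> * P2"
          unfolding P2_def ind by (simp add: mult_ac)
        also have "\<dots> \<le> t powr \<gamma> * (P1 + P2)" using P1 tg by (simp add: mult_left_mono)
        finally show "measure lebesgue \<Omega> \<le> t powr \<gamma> * (P1 + P2)" .
      qed
      finally show ?thesis .
    qed
  qed
  then show ?thesis by (simp add: P1_def P2_def q_def)
qed

lemma upper_main:
  fixes \<Omega> :: "'a::euclidean_space set" and J :: "'a \<Rightarrow> real"
  assumes \<Omega>: "\<Omega> \<in> sets lebesgue" and bd: "bounded \<Omega>"
   and J: "integrable lebesgue J" and Jnn: "\<And>z. J z \<ge> 0"
   and Jn: "integrable lebesgue (\<lambda>z. J z * norm z ^ DIM('a))"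
   and g: "0 \<le> \<gamma>" "\<gamma> \<le> real DIM('a)" and t: "t > 0" and \<delta>: "\<delta> > 0" and M': "M' \<ge> 0"
   and hyp: "\<And>s. 0 < s \<Longrightarrow> s < \<delta> \<Longrightarrow> measure lebesgue (nbhd (frontier \<Omega>) s) \<le> M' * s powr \<gamma>"
  shows "nonlocal_J J \<Omega> t \<le> t ^ DIM('a) * (t powr \<gamma> * (M' * 2 powr \<gamma> * (LINT z|lebesgue. J z * norm z powr \<gamma>)
     + measure lebesgue \<Omega> * (2/\<delta>) powr \<gamma> * (LINT z|lebesgue. J z * norm z powr \<gamma> * indicator {z. \<delta>/(2*t) \<le> norm z} z)))"
proof -
  let ?n = "DIM('a)"
  let ?A = "\<lambda>z. emeasure lebesgue {y\<in>\<Omega>. y + t *\<^sub>R z \<notin> \<Omega>}"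
  define c1 where "c1 = M' * 2 powr \<gamma>"
  define c2 where "c2 = measure lebesgue \<Omega> * (2/\<delta>) powr \<gamma>"
  define g1 where "g1 = (\<lambda>z::'a. J z * norm z powr \<gamma>)"
  define g2 where "g2 = (\<lambda>z::'a. g1 z * indicator {z. \<delta>/(2*t) \<le> norm z} z)"
  define b where "b = (\<lambda>z. (t powr \<gamma> * c1) * g1 z + (t powr \<gamma> * c2) * g2 z)"
  define I where "I = (\<integral>\<^sup>+z. ennreal (J z) * ?A z \<partial>lebesgue)"
  have c1: "c1 \<ge> 0" using M' by (simp add: c1_def)
  have c2: "c2 \<ge> 0" by (simp add: c2_def)
  have fin: "emeasure lebesgue \<Omega> < \<infinity>" by (rule bounded_emeasure_finite[OF bd])
  have rep: "nonlocal_J J \<Omega> t = enn2real (ennreal (t ^ ?n) * I)"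
    unfolding I_def by (rule nonlocal_repr[OF \<Omega> J Jnn t])
  have g1i: "integrable lebesgue g1" unfolding g1_def by (rule Jpow_integrable[OF J Jn Jnn g])
  have g2i: "integrable lebesgue g2"
  proof (rule Bochner_Integration.integrable_bound[OF g1i])
    have "{z::'a. \<delta>/(2*t) \<le> norm z} \<in> sets lebesgue"
    proof -
      have "closed {z::'a. \<delta>/(2*t) \<le> norm z}" by (intro closed_Collect_le continuous_intros)
      then have "{z::'a. \<delta>/(2*t) \<le> norm z} \<in> sets lborel" by (simp add: borel_closed)
      then show ?thesis by (rule sets_completionI_sets)
    qed
    then have "(indicator {z::'a. \<delta>/(2*t) \<le> norm z} :: 'a \<Rightarrow> real) \<in> borel_measurable lebesgue"
      by (rule borel_measurable_indicator)
    moreover have "g1 \<in> borel_measurable lebesgue" using g1i by auto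
    ultimately show "g2 \<in> borel_measurable lebesgue"
      unfolding g2_def by (rule borel_measurable_times[rotated])
    show "AE z in lebesgue. norm (g2 z) \<le> norm (g1 z)"
    proof (rule AE_I2)
      fix z :: 'a
      show "norm (g2 z) \<le> norm (g1 z)"
        unfolding g1_def g2_def by (cases "\<delta>/(2*t) \<le> norm z") simp_all
    qed
  qed
  have bi: "integrable lebesgue b" unfolding b_def using g1i g2i by simp
  have b0: "b z \<ge> 0" for z
    unfolding b_def g1_def g2_def using c1 c2 Jnn[of z] by simp
  have Ib: "I \<le> ennreal (integral\<^sup>L lebesgue b)"
  proof -
    have "I \<le> (\<integral>\<^sup>+z. ennreal (b z) \<partial>lebesgue)" unfolding I_def
    proof (rule nn_integral_mono)
      fix z :: 'a
      have "?A z \<le> ennreal (t powr \<gamma> * (M' * 2 powr \<gamma> * norm z powr \<gamma>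
          + measure lebesgue \<Omega> * (2/\<delta>) powr \<gamma> * (norm z powr \<gamma> * indicator {z. \<delta>/(2*t) \<le> norm z} z)))"
        by (rule upper_pointwise_A[OF \<Omega> bd g(1) t \<delta> M' hyp])
      then have "ennreal (J z) * ?A z \<le> ennreal (J z) * ennreal (t powr \<gamma> * (M' * 2 powr \<gamma> * norm z powr \<gamma>
          + measure lebesgue \<Omega> * (2/\<delta>) powr \<gamma> * (norm z powr \<gamma> * indicator {z. \<delta>/(2*t) \<le> norm z} z)))"
        by (rule mult_left_mono) simp
      also have "\<dots> = ennreal (J z * (t powr \<gamma> * (M' * 2 powr \<gamma> * norm z powr \<gamma>
          + measure lebesgue \<Omega> * (2/\<delta>) powr \<gamma> * (norm z powr \<gamma> * indicator {z. \<delta>/(2*t) \<le> norm z} z))))"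
        using Jnn[of z] M' by (simp add: ennreal_mult)
      also have "J z * (t powr \<gamma> * (M' * 2 powr \<gamma> * norm z powr \<gamma>
          + measure lebesgue \<Omega> * (2/\<delta>) powr \<gamma> * (norm z powr \<gamma> * indicator {z. \<delta>/(2*t) \<le> norm z} z))) = b z"
        unfolding b_def c1_def c2_def g1_def g2_def by (simp add: algebra_simps)
      finally show "ennreal (J z) * ?A z \<le> ennreal (b z)" .
    qed
    also have "\<dots> = ennreal (integral\<^sup>L lebesgue b)"
      by (rule nn_integral_eq_integral[OF bi]) (simp add: b0)
    finally show ?thesis .
  qed
  have bint: "integral\<^sup>L lebesgue b = t powr \<gamma> * (c1 * integral\<^sup>L lebesgue g1 + c2 * integral\<^sup>L lebesgue g2)"
  proof -
    have "integral\<^sup>L lebesgue b = integral\<^sup>L lebesgue (\<lambda>z. (t powr \<gamma> * c1) * g1 z) + integral\<^sup>L lebesgue (\<lambda>z. (t powr \<gamma> * c2) * g2 z)"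
      unfolding b_def using g1i g2i by (intro Bochner_Integration.integral_add) simp_all
    also have "\<dots> = (t powr \<gamma> * c1) * integral\<^sup>L lebesgue g1 + (t powr \<gamma> * c2) * integral\<^sup>L lebesgue g2"
      by (simp only: integral_mult_right_zero)
    finally show ?thesis by (simp add: algebra_simps)
  qed
  have B0: "integral\<^sup>L lebesgue b \<ge> 0" by (rule integral_nonneg_AE) (simp add: b0)
  have "nonlocal_J J \<Omega> t \<le> enn2real (ennreal (t ^ ?n) * ennreal (integral\<^sup>L lebesgue b))"
    unfolding rep
  proof (rule enn2real_mono)
    show "ennreal (t ^ ?n) * I \<le> ennreal (t ^ ?n) * ennreal (integral\<^sup>L lebesgue b)"
      by (rule mult_left_mono[OF Ib]) simp
    show "ennreal (t ^ ?n) * ennreal (integral\<^sup>L lebesgue b) < top"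
      by (simp add: ennreal_mult_less_top)
  qed
  also have "\<dots> = t ^ ?n * integral\<^sup>L lebesgue b"
    using t B0 by (simp add: ennreal_mult[symmetric])
  finally show ?thesis unfolding bint c1_def c2_def g1_def g2_def .
qed

lemma min_powr:
  fixes x g :: real
  assumes "0 < x" "0 \<le> g" "g \<le> 1"
  shows "min 1 x \<le> x powr g"
proof (cases "x \<le> 1")
  case True
  have "x powr 1 \<le> x powr g" by (rule powr_mono') (use assms True in auto)
  then show ?thesis using assms by simp
next
  case False
  then have "1 \<le> x powr g" using assms by (intro ge_one_powr_ge_zero) auto
  then show ?thesis by simp
qed

lemma powr_split:
  fixes t :: real
  assumes "t > 0"
  shows "t powr (2 * real n - \<alpha>) = t ^ n * t powr (real n - \<alpha>)"
proof -
  have "t powr (2 * real n - \<alpha>) = t powr (real n + (real n - \<alpha>))" by simp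
  also have "\<dots> = t powr real n * t powr (real n - \<alpha>)" by (rule powr_add)
  also have "t powr real n = t ^ n" using assms by (rule powr_realpow)
  finally show ?thesis .
qed

lemma lower_liminf:
  fixes \<Omega> :: "'a::euclidean_space set" and J :: "'a \<Rightarrow> real"
  assumes \<alpha>1: "real DIM('a) - 1 \<le> \<alpha>" and \<alpha>2: "\<alpha> \<le> real DIM('a)"
   and \<Omega>: "\<Omega> \<in> sets lebesgue" and bd: "bounded \<Omega>"
   and M2: "M2 > 0" and lowM: "ereal M2 \<le> lower_minkowski \<alpha> (frontier \<Omega>)"
   and Dh: "\<forall>x\<in>frontier \<Omega>. \<forall>r\<in>{0<..<1}. min (measure lebesgue (ball x r \<inter> \<Omega>)) (measure lebesgue (ball x r \<inter> (- \<Omega>))) \<ge> D * r ^ DIM('a)"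
   and D: "D > 0"
   and J: "integrable lebesgue J" and Jnn: "\<And>z. J z \<ge> 0"
   and cJ: "cJ > 0" and a: "a > 0" and Jc: "\<And>z. norm z \<le> a \<Longrightarrow> J z \<ge> cJ"
  shows "ereal (cJ * D * (a/2) ^ DIM('a) * min 1 (a/2) / 4 * M2)
     \<le> Liminf (at_right 0) (\<lambda>t. ereal (nonlocal_J J \<Omega> t / t powr (2 * real DIM('a) - \<alpha>)))"
proof -
  let ?n = "DIM('a)"
  define \<gamma> where "\<gamma> = real ?n - \<alpha>"
  have g0: "0 \<le> \<gamma>" and g1: "\<gamma> \<le> 1" using \<alpha>1 \<alpha>2 by (auto simp: \<gamma>_def)
  define V where "V = (\<lambda>s. measure lebesgue (nbhd (frontier \<Omega>) s))"
  define K0 where "K0 = cJ * D * (a/2) ^ ?n / 2"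
  define K where "K = K0 * (a/2) powr \<gamma>"
  define O2 where "O2 = cJ * D * (a/2) ^ ?n * min 1 (a/2) / 4"
  have K0: "K0 > 0" using cJ D a by (simp add: K0_def)
  have K: "K > 0" using K0 a by (simp add: K_def)
  have O2K: "O2 \<le> K / 2"
  proof -
    have "min 1 (a/2) \<le> (a/2) powr \<gamma>" using a g0 g1 by (intro min_powr) auto
    then have "K0 * min 1 (a/2) \<le> K0 * (a/2) powr \<gamma>" using K0 by (intro mult_left_mono) auto
    moreover have "O2 = K0 * min 1 (a/2) / 2" by (simp add: O2_def K0_def)
    ultimately show ?thesis by (simp add: K_def)
  qed
  have key: "K * (V (a * t / 2) / (a * t / 2) powr \<gamma>) \<le> nonlocal_J J \<Omega> t / t powr (2 * real ?n - \<alpha>)"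
    if t: "t > 0" "a * t / 2 < 1" for t
  proof -
    have low: "t ^ ?n * K0 * V (a * t / 2) \<le> nonlocal_J J \<Omega> t"
      unfolding K0_def V_def by (rule lower_main[OF \<Omega> bd Dh D J Jnn cJ a Jc t])
    have tp: "t powr (2 * real ?n - \<alpha>) = t ^ ?n * t powr \<gamma>"
      unfolding \<gamma>_def by (rule powr_split[OF t(1)])
    have tpos: "t ^ ?n * t powr \<gamma> > 0" using t by simp
    have sp: "(a * t / 2) powr \<gamma> = (a/2) powr \<gamma> * t powr \<gamma>"
    proof -
      have "a * t / 2 = (a/2) * t" by simp
      then show ?thesis by (simp only: powr_mult)
    qed
    have ap: "(a/2) powr \<gamma> > 0" using a by simp
    have "K * (V (a * t / 2) / (a * t / 2) powr \<gamma>) = (t ^ ?n * K0 * V (a * t / 2)) / (t ^ ?n * t powr \<gamma>)"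
      unfolding sp K_def using ap t by (simp add: field_simps)
    also have "\<dots> \<le> nonlocal_J J \<Omega> t / (t ^ ?n * t powr \<gamma>)"
      by (rule divide_right_mono[OF low]) (use tpos in simp)
    finally show ?thesis unfolding tp .
  qed
  show ?thesis unfolding O2_def[symmetric] le_Liminf_iff
  proof (intro allI impI)
    fix y assume y: "y < ereal (O2 * M2)"
    define c0 where "c0 = O2 * M2 / K"
    have c0M2: "c0 < M2"
    proof -
      have "c0 \<le> (K / 2) * M2 / K" unfolding c0_def using O2K M2 K by (intro divide_right_mono mult_right_mono) auto
      also have "\<dots> = M2 / 2" using K by simp
      finally show ?thesis using M2 by simp
    qed
    have ce: "ereal c0 < ereal M2" using c0M2 by simp
    have "\<forall>y<ereal M2. \<forall>\<^sub>F s in at_right 0. y < ereal (V s / s powr \<gamma>)"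
      using lowM unfolding lower_minkowski_def le_Liminf_iff V_def \<gamma>_def .
    then have "\<forall>\<^sub>F s in at_right 0. ereal c0 < ereal (V s / s powr \<gamma>)"
      using ce by blast
    then obtain b where b: "b > 0" and bP: "\<And>s. s > 0 \<Longrightarrow> s < b \<Longrightarrow> c0 < V s / s powr \<gamma>"
      unfolding eventually_at_right_field by auto
    show "\<forall>\<^sub>F t in at_right 0. y < ereal (nonlocal_J J \<Omega> t / t powr (2 * real ?n - \<alpha>))"
      unfolding eventually_at_right_field
    proof (intro exI[of _ "min (2 * b / a) (1 / a)"] conjI allI impI)
      show "(0::real) < min (2 * b / a) (1 / a)" using a b by simp
      fix t :: real assume t0: "t > 0" and tb: "t < min (2 * b / a) (1 / a)"
      have s0: "a * t / 2 > 0" using a t0 by simp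
      have sb: "a * t / 2 < b" using tb a by (simp add: field_simps)
      have s1: "a * t / 2 < 1"
      proof -
        have "a * t < 1" using tb a by (simp add: field_simps)
        then show ?thesis by simp
      qed
      have "O2 * M2 = K * c0" using K by (simp add: c0_def)
      also have "\<dots> < K * (V (a * t / 2) / (a * t / 2) powr \<gamma>)"
        using bP[OF s0 sb] K by (rule mult_strict_left_mono)
      also have "\<dots> \<le> nonlocal_J J \<Omega> t / t powr (2 * real ?n - \<alpha>)" by (rule key[OF t0 s1])
      finally have "O2 * M2 < nonlocal_J J \<Omega> t / t powr (2 * real ?n - \<alpha>)" .
      then have "ereal (O2 * M2) < ereal (nonlocal_J J \<Omega> t / t powr (2 * real ?n - \<alpha>))" by simp
      with y show "y < ereal (nonlocal_J J \<Omega> t / t powr (2 * real ?n - \<alpha>))" by (rule less_trans)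
    qed
  qed
qed

lemma upper_limsup:
  fixes \<Omega> :: "'a::euclidean_space set" and J :: "'a \<Rightarrow> real"
  assumes \<alpha>1: "real DIM('a) - 1 \<le> \<alpha>" and \<alpha>2: "\<alpha> \<le> real DIM('a)"
   and \<Omega>: "\<Omega> \<in> sets lebesgue" and bd: "bounded \<Omega>"
   and M1: "M1 > 0" and upM: "upper_minkowski \<alpha> (frontier \<Omega>) \<le> ereal M1"
   and J: "integrable lebesgue J" and Jnn: "\<And>z. J z \<ge> 0"
   and Jn: "integrable lebesgue (\<lambda>z. J z * norm z ^ DIM('a))"
   and CJ: "CJ > 0" and CJb: "\<forall>\<gamma>\<in>{0..real DIM('a)}. (LINT z|lebesgue. J z * norm z powr \<gamma>) \<le> CJ"
  shows "Limsup (at_right 0) (\<lambda>t. ereal (nonlocal_J J \<Omega> t / t powr (2 * real DIM('a) - \<alpha>)))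
     \<le> ereal ((2 ^ DIM('a) * CJ + 1) * M1)"
proof -
  let ?n = "DIM('a)"
  define \<gamma> where "\<gamma> = real ?n - \<alpha>"
  have n1: "(1::real) \<le> real ?n"
  proof -
    have "1 \<le> ?n" using DIM_positive[where 'a='a] by simp
    then show ?thesis by simp
  qed
  have g0: "0 \<le> \<gamma>" unfolding \<gamma>_def using \<alpha>2 by linarith
  have g1: "\<gamma> \<le> real ?n" unfolding \<gamma>_def using \<alpha>1 n1 by linarith
  define V where "V = (\<lambda>s. measure lebesgue (nbhd (frontier \<Omega>) s))"
  define G where "G = (LINT z|lebesgue. J z * norm z powr \<gamma>)"
  define T where "T = (\<lambda>R. LINT z|lebesgue. J z * norm z powr \<gamma> * indicator {z. R \<le> norm z} z)"
  define M' where "M' = M1 + M1 / (4 * 2 ^ ?n * CJ)"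
  have M'0: "M' \<ge> 0" using M1 CJ by (simp add: M'_def)
  have M'M1: "M1 < M'" using M1 CJ by (simp add: M'_def)
  have G0: "G \<ge> 0" unfolding G_def by (rule integral_nonneg_AE) (simp add: Jnn)
  have GC: "G \<le> CJ" using CJb g0 g1 by (simp add: G_def)
  have p2: "2 powr \<gamma> \<le> 2 ^ ?n"
  proof -
    have "2 powr \<gamma> \<le> 2 powr real ?n" using g1 by (intro powr_mono) auto
    also have "\<dots> = 2 ^ ?n" by (simp add: powr_realpow)
    finally show ?thesis .
  qed
  have main1: "M' * 2 powr \<gamma> * G \<le> 2 ^ ?n * CJ * M1 + M1 / 4"
  proof -
    have "M' * 2 powr \<gamma> * G \<le> M' * 2 ^ ?n * CJ"
      using p2 GC G0 M'0 by (intro mult_mono) auto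
    also have "\<dots> = 2 ^ ?n * CJ * M1 + M1 / 4" using CJ by (simp add: M'_def field_simps)
    finally show ?thesis .
  qed
  show ?thesis unfolding Limsup_le_iff
  proof (intro allI impI)
    fix y assume y: "ereal ((2 ^ ?n * CJ + 1) * M1) < y"
    have "\<forall>y>ereal M1. \<forall>\<^sub>F s in at_right 0. ereal (V s / s powr \<gamma>) < y"
      using upM unfolding upper_minkowski_def Limsup_le_iff V_def \<gamma>_def .
    moreover have "ereal M1 < ereal M'" using M'M1 by simp
    ultimately have "\<forall>\<^sub>F s in at_right 0. ereal (V s / s powr \<gamma>) < ereal M'"
      by blast
    then have "\<forall>\<^sub>F s in at_right 0. V s / s powr \<gamma> < M'" by simp
    then obtain \<delta> where \<delta>: "\<delta> > 0" and \<delta>P: "\<And>s. s > 0 \<Longrightarrow> s < \<delta> \<Longrightarrow> V s / s powr \<gamma> < M'"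
      unfolding eventually_at_right_field by auto
    have hyp: "measure lebesgue (nbhd (frontier \<Omega>) s) \<le> M' * s powr \<gamma>" if "0 < s" "s < \<delta>" for s
    proof -
      have "V s / s powr \<gamma> < M'" by (rule \<delta>P[OF that])
      moreover have "s powr \<gamma> > 0" using that by simp
      ultimately have "V s < M' * s powr \<gamma>" by (simp add: divide_less_eq)
      then show ?thesis by (simp add: V_def)
    qed
    define c2 where "c2 = measure lebesgue \<Omega> * (2/\<delta>) powr \<gamma>"
    have c2: "c2 \<ge> 0" by (simp add: c2_def)
    have g1i: "integrable lebesgue (\<lambda>z. J z * norm z powr \<gamma>)" by (rule Jpow_integrable[OF J Jn Jnn g0 g1])
    have "(T \<longlongrightarrow> 0) at_top" unfolding T_def by (rule tail_tendsto[OF g1i])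
    then have "\<forall>\<^sub>F R in at_top. dist (T R) 0 < M1 / (4 * (c2 + 1))"
      using M1 c2 by (intro tendstoD) auto
    then obtain R0 where R0: "\<And>R. R \<ge> R0 \<Longrightarrow> \<bar>T R\<bar> < M1 / (4 * (c2 + 1))"
      unfolding eventually_at_top_linorder by auto
    define R1 where "R1 = max R0 1"
    have R1: "R1 > 0" "R1 \<ge> R0" by (auto simp: R1_def)
    show "\<forall>\<^sub>F t in at_right 0. ereal (nonlocal_J J \<Omega> t / t powr (2 * real ?n - \<alpha>)) < y"
      unfolding eventually_at_right_field
    proof (intro exI[of _ "\<delta> / (2 * R1)"] conjI allI impI)
      show "(0::real) < \<delta> / (2 * R1)" using \<delta> R1 by simp
      fix t :: real assume t0: "t > 0" and tb: "t < \<delta> / (2 * R1)"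
      have RR: "\<delta> / (2 * t) \<ge> R0"
      proof -
        have "t * (2 * R1) < \<delta>" using tb R1 by (simp add: field_simps)
        then have "R1 < \<delta> / (2 * t)" using t0 by (simp add: field_simps)
        then show ?thesis using R1 by simp
      qed
      have Tb: "c2 * T (\<delta> / (2 * t)) \<le> M1 / 4"
      proof -
        have "\<bar>T (\<delta> / (2 * t))\<bar> < M1 / (4 * (c2 + 1))" by (rule R0[OF RR])
        then have "c2 * T (\<delta> / (2 * t)) \<le> c2 * (M1 / (4 * (c2 + 1)))"
          using c2 by (intro mult_left_mono) auto
        also have "\<dots> \<le> M1 / 4"
        proof -
          have "c2 / (c2 + 1) \<le> 1" using c2 by simp
          then have "c2 / (c2 + 1) * (M1 / 4) \<le> 1 * (M1 / 4)" using M1 by (intro mult_right_mono) auto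
          moreover have "c2 * (M1 / (4 * (c2 + 1))) = c2 / (c2 + 1) * (M1 / 4)" by (simp add: field_simps)
          ultimately show ?thesis by linarith
        qed
        finally show ?thesis .
      qed
      have up: "nonlocal_J J \<Omega> t \<le> t ^ ?n * (t powr \<gamma> * (M' * 2 powr \<gamma> * G + c2 * T (\<delta> / (2 * t))))"
        unfolding G_def T_def c2_def
        by (rule upper_main[OF \<Omega> bd J Jnn Jn g0 g1 t0 \<delta> M'0 hyp])
      have tp: "t powr (2 * real ?n - \<alpha>) = t ^ ?n * t powr \<gamma>"
        unfolding \<gamma>_def by (rule powr_split[OF t0])
      have tpos: "t ^ ?n * t powr \<gamma> > 0" using t0 by simp
      have "nonlocal_J J \<Omega> t / t powr (2 * real ?n - \<alpha>) \<le> M' * 2 powr \<gamma> * G + c2 * T (\<delta> / (2 * t))"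
      proof -
        have e: "t ^ ?n * (t powr \<gamma> * (M' * 2 powr \<gamma> * G + c2 * T (\<delta> / (2 * t))))
           = (M' * 2 powr \<gamma> * G + c2 * T (\<delta> / (2 * t))) * (t ^ ?n * t powr \<gamma>)" by (simp only: mult_ac)
        show ?thesis unfolding tp using up tpos unfolding e by (simp add: divide_le_eq)
      qed
      also have "\<dots> \<le> 2 ^ ?n * CJ * M1 + M1 / 4 + M1 / 4" using main1 Tb by linarith
      also have "\<dots> < (2 ^ ?n * CJ + 1) * M1" using M1 by (simp add: algebra_simps)
      finally have "ereal (nonlocal_J J \<Omega> t / t powr (2 * real ?n - \<alpha>)) < ereal ((2 ^ ?n * CJ + 1) * M1)" by simp
      then show "ereal (nonlocal_J J \<Omega> t / t powr (2 * real ?n - \<alpha>)) < y" using y by (rule less_trans)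
    qed
  qed
qed

theorem theorem1p1:
  fixes dummy :: "'a::euclidean_space"
  shows "\<exists>(O1 :: real \<Rightarrow> real) (O2 :: real \<Rightarrow> real \<Rightarrow> real \<Rightarrow> real).
    (\<forall>a c D. a > 0 \<longrightarrow> c > 0 \<longrightarrow> D > 0 \<longrightarrow> O2 a c D > 0) \<and>
    (\<forall>(\<Omega> :: 'a set) (\<alpha> :: real) (M1 :: real) (M2 :: real) (D :: real)
        (J :: 'a \<Rightarrow> real) (CJ :: real) (cJ :: real) (aJ :: real).
      real DIM('a) - 1 \<le> \<alpha> \<and> \<alpha> \<le> real DIM('a) \<and>
      \<Omega> \<in> sets lebesgue \<and> bounded \<Omega> \<and> measure lebesgue \<Omega> > 0 \<and>
      M1 > 0 \<and> M2 > 0 \<and>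
      ereal M2 \<le> lower_minkowski \<alpha> (frontier \<Omega>) \<and>
      lower_minkowski \<alpha> (frontier \<Omega>) \<le> upper_minkowski \<alpha> (frontier \<Omega>) \<and>
      upper_minkowski \<alpha> (frontier \<Omega>) \<le> ereal M1 \<and>
      D > 0 \<and>
      (\<forall>x\<in>frontier \<Omega>. \<forall>t\<in>{0<..<1}.
         min (measure lebesgue (ball x t \<inter> \<Omega>)) (measure lebesgue (ball x t \<inter> (- \<Omega>)))
           \<ge> D * t ^ DIM('a)) \<and>
      (\<forall>z. J z \<ge> 0) \<and> integrable lebesgue J \<and>
      integrable lebesgue (\<lambda>z. J z * norm z ^ DIM('a)) \<and>
      CJ > 0 \<and>
      (\<forall>\<gamma>\<in>{0..real DIM('a)}. (LINT z|lebesgue. J z * norm z powr \<gamma>) \<le> CJ) \<and>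
      cJ > 0 \<and> aJ > 0 \<and> (\<forall>z. norm z \<le> aJ \<longrightarrow> J z \<ge> cJ)
      \<longrightarrow>
      0 < ereal (O2 aJ cJ D * M2) \<and>
      ereal (O2 aJ cJ D * M2) \<le>
        Liminf (at_right 0) (\<lambda>t. ereal (nonlocal_J J \<Omega> t / t powr (2 * real DIM('a) - \<alpha>))) \<and>
      Liminf (at_right 0) (\<lambda>t. ereal (nonlocal_J J \<Omega> t / t powr (2 * real DIM('a) - \<alpha>))) \<le>
        Limsup (at_right 0) (\<lambda>t. ereal (nonlocal_J J \<Omega> t / t powr (2 * real DIM('a) - \<alpha>))) \<and>
      Limsup (at_right 0) (\<lambda>t. ereal (nonlocal_J J \<Omega> t / t powr (2 * real DIM('a) - \<alpha>))) \<le>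
        ereal (O1 CJ * M1) \<and>
      ereal (O1 CJ * M1) < \<infinity>)"
proof -
  let ?n = "DIM('a)"
  define O1 where "O1 = (\<lambda>CJ::real. 2 ^ ?n * CJ + 1)"
  define O2 where "O2 = (\<lambda>a c D::real. c * D * (a/2) ^ ?n * min 1 (a/2) / 4)"
  have P1: "\<forall>a c D. a > 0 \<longrightarrow> c > 0 \<longrightarrow> D > 0 \<longrightarrow> O2 a c D > 0"
    by (simp add: O2_def)
  have P2: "\<forall>(\<Omega> :: 'a set) (\<alpha> :: real) (M1 :: real) (M2 :: real) (D :: real)
        (J :: 'a \<Rightarrow> real) (CJ :: real) (cJ :: real) (aJ :: real).
      real DIM('a) - 1 \<le> \<alpha> \<and> \<alpha> \<le> real DIM('a) \<and>
      \<Omega> \<in> sets lebesgue \<and> bounded \<Omega> \<and> measure lebesgue \<Omega> > 0 \<and>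
      M1 > 0 \<and> M2 > 0 \<and>
      ereal M2 \<le> lower_minkowski \<alpha> (frontier \<Omega>) \<and>
      lower_minkowski \<alpha> (frontier \<Omega>) \<le> upper_minkowski \<alpha> (frontier \<Omega>) \<and>
      upper_minkowski \<alpha> (frontier \<Omega>) \<le> ereal M1 \<and>
      D > 0 \<and>
      (\<forall>x\<in>frontier \<Omega>. \<forall>t\<in>{0<..<1}.
         min (measure lebesgue (ball x t \<inter> \<Omega>)) (measure lebesgue (ball x t \<inter> (- \<Omega>)))
           \<ge> D * t ^ DIM('a)) \<and>
      (\<forall>z. J z \<ge> 0) \<and> integrable lebesgue J \<and>
      integrable lebesgue (\<lambda>z. J z * norm z ^ DIM('a)) \<and>
      CJ > 0 \<and>
      (\<forall>\<gamma>\<in>{0..real DIM('a)}. (LINT z|lebesgue. J z * norm z powr \<gamma>) \<le> CJ) \<and>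
      cJ > 0 \<and> aJ > 0 \<and> (\<forall>z. norm z \<le> aJ \<longrightarrow> J z \<ge> cJ)
      \<longrightarrow>
      0 < ereal (O2 aJ cJ D * M2) \<and>
      ereal (O2 aJ cJ D * M2) \<le>
        Liminf (at_right 0) (\<lambda>t. ereal (nonlocal_J J \<Omega> t / t powr (2 * real DIM('a) - \<alpha>))) \<and>
      Liminf (at_right 0) (\<lambda>t. ereal (nonlocal_J J \<Omega> t / t powr (2 * real DIM('a) - \<alpha>))) \<le>
        Limsup (at_right 0) (\<lambda>t. ereal (nonlocal_J J \<Omega> t / t powr (2 * real DIM('a) - \<alpha>))) \<and>
      Limsup (at_right 0) (\<lambda>t. ereal (nonlocal_J J \<Omega> t / t powr (2 * real DIM('a) - \<alpha>))) \<le>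
        ereal (O1 CJ * M1) \<and>
      ereal (O1 CJ * M1) < \<infinity>"
  proof (intro allI impI)
    fix \<Omega> :: "'a set" and \<alpha> M1 M2 D :: real and J :: "'a \<Rightarrow> real" and CJ cJ aJ :: real
    assume H: "real DIM('a) - 1 \<le> \<alpha> \<and> \<alpha> \<le> real DIM('a) \<and>
      \<Omega> \<in> sets lebesgue \<and> bounded \<Omega> \<and> measure lebesgue \<Omega> > 0 \<and>
      M1 > 0 \<and> M2 > 0 \<and>
      ereal M2 \<le> lower_minkowski \<alpha> (frontier \<Omega>) \<and>
      lower_minkowski \<alpha> (frontier \<Omega>) \<le> upper_minkowski \<alpha> (frontier \<Omega>) \<and>
      upper_minkowski \<alpha> (frontier \<Omega>) \<le> ereal M1 \<and>
      D > 0 \<and>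
      (\<forall>x\<in>frontier \<Omega>. \<forall>t\<in>{0<..<1}.
         min (measure lebesgue (ball x t \<inter> \<Omega>)) (measure lebesgue (ball x t \<inter> (- \<Omega>)))
           \<ge> D * t ^ DIM('a)) \<and>
      (\<forall>z. J z \<ge> 0) \<and> integrable lebesgue J \<and>
      integrable lebesgue (\<lambda>z. J z * norm z ^ DIM('a)) \<and>
      CJ > 0 \<and>
      (\<forall>\<gamma>\<in>{0..real DIM('a)}. (LINT z|lebesgue. J z * norm z powr \<gamma>) \<le> CJ) \<and>
      cJ > 0 \<and> aJ > 0 \<and> (\<forall>z. norm z \<le> aJ \<longrightarrow> J z \<ge> cJ)"
    then have \<alpha>1: "real DIM('a) - 1 \<le> \<alpha>" and \<alpha>2: "\<alpha> \<le> real DIM('a)"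
      and \<Omega>: "\<Omega> \<in> sets lebesgue" and bd: "bounded \<Omega>"
      and M1: "M1 > 0" and M2: "M2 > 0"
      and lowM: "ereal M2 \<le> lower_minkowski \<alpha> (frontier \<Omega>)"
      and upM: "upper_minkowski \<alpha> (frontier \<Omega>) \<le> ereal M1"
      and D: "D > 0"
      and Dh: "\<forall>x\<in>frontier \<Omega>. \<forall>t\<in>{0<..<1}.
         min (measure lebesgue (ball x t \<inter> \<Omega>)) (measure lebesgue (ball x t \<inter> (- \<Omega>)))
           \<ge> D * t ^ DIM('a)"
      and Jnn: "\<forall>z. J z \<ge> 0" and J: "integrable lebesgue J"
      and Jn: "integrable lebesgue (\<lambda>z. J z * norm z ^ DIM('a))"
      and CJ: "CJ > 0"
      and CJb: "\<forall>\<gamma>\<in>{0..real DIM('a)}. (LINT z|lebesgue. J z * norm z powr \<gamma>) \<le> CJ"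
      and cJ: "cJ > 0" and aJ: "aJ > 0" and Jc: "\<forall>z. norm z \<le> aJ \<longrightarrow> J z \<ge> cJ"
      by blast+
    have Jnn': "\<And>z. J z \<ge> 0" using Jnn by blast
    have Jc': "\<And>z. norm z \<le> aJ \<Longrightarrow> J z \<ge> cJ" using Jc by blast
    have L: "ereal (O2 aJ cJ D * M2) \<le> Liminf (at_right 0) (\<lambda>t. ereal (nonlocal_J J \<Omega> t / t powr (2 * real DIM('a) - \<alpha>)))"
      unfolding O2_def using lower_liminf[OF \<alpha>1 \<alpha>2 \<Omega> bd M2 lowM Dh D J Jnn' cJ aJ Jc'] by simp
    have U: "Limsup (at_right 0) (\<lambda>t. ereal (nonlocal_J J \<Omega> t / t powr (2 * real DIM('a) - \<alpha>))) \<le> ereal (O1 CJ * M1)"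
      unfolding O1_def using upper_limsup[OF \<alpha>1 \<alpha>2 \<Omega> bd M1 upM J Jnn' Jn CJ CJb] by simp
    have LU: "Liminf (at_right 0) (\<lambda>t. ereal (nonlocal_J J \<Omega> t / t powr (2 * real DIM('a) - \<alpha>))) \<le>
        Limsup (at_right 0) (\<lambda>t. ereal (nonlocal_J J \<Omega> t / t powr (2 * real DIM('a) - \<alpha>)))"
      by (rule Liminf_le_Limsup) simp
    have pos: "0 < ereal (O2 aJ cJ D * M2)" using P1 aJ cJ D M2 by simp
    have fin: "ereal (O1 CJ * M1) < \<infinity>" by simp
    show "0 < ereal (O2 aJ cJ D * M2) \<and>
      ereal (O2 aJ cJ D * M2) \<le>
        Liminf (at_right 0) (\<lambda>t. ereal (nonlocal_J J \<Omega> t / t powr (2 * real DIM('a) - \<alpha>))) \<and>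
      Liminf (at_right 0) (\<lambda>t. ereal (nonlocal_J J \<Omega> t / t powr (2 * real DIM('a) - \<alpha>))) \<le>
        Limsup (at_right 0) (\<lambda>t. ereal (nonlocal_J J \<Omega> t / t powr (2 * real DIM('a) - \<alpha>))) \<and>
      Limsup (at_right 0) (\<lambda>t. ereal (nonlocal_J J \<Omega> t / t powr (2 * real DIM('a) - \<alpha>))) \<le>
        ereal (O1 CJ * M1) \<and>
      ereal (O1 CJ * M1) < \<infinity>"
      using pos L LU U fin by (intro conjI)
  qed
  show ?thesis by (rule exI[of _ O1], rule exI[of _ O2], rule conjI[OF P1 P2])
qed

end
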